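(* Let $q,Q_1,\dots,Q_r$ be indeterminates and $R=\mathbb Q(q,Q_1,\dots,Q_r)$. For every multipartition $\lambda$ of $n$, $$\gamma_{\mathfrak t_\lambda}=q^{\ell(w_\lambda)}\prod_{(i,j,s)\in[\lambda]}\left(\frac{[h^{\lambda^{(s)}}_{ij}]_q}{[\ell^{\lambda^{(s)}}_{ij}]_q}\prod_{t=s+1}^r\Big((q^{j-i}Q_s-q^{\lambda^{(t)}_1}Q_t)\prod_{k=1}^{\lambda_1^{(t)}}\frac{q^{j-i}Q_s-q^{k-1-\lambda^{(t)\prime}_k}Q_t}{q^{j-i}Q_s-q^{k-\lambda^{(t)\prime}_k}Q_t}\Big)\right).$$
   Context: Ariki–Koike algebra over $R$ with parameters $q,Q_1,\dots,Q_r$ ($n,r\ge1$). Multipartition $\lambda=(\lambda^{(1)},\dots,\lambda^{(r)})$ of $n$, diagram $[\lambda]=\{(i,j,s):1\le j\le\lambda^{(s)}_i\}$; $\lambda^{(t)\prime}_k$ is the length of the $k$-th column of $\lambda^{(t)}$. Hook length $h^{\lambda^{(s)}}_{ij}=\lambda^{(s)}_i+\lambda^{(s)\prime}_j-i-j+1$ and leg length $\ell^{\lambda^{(s)}}_{ij}=\lambda^{(s)\prime}_j-i+1$. $[k]_q=1+q+\dots+q^{k-1}$, $[k]_q!=[1]_q\cdots[k]_q$, $[\lambda]_q!=\prod_{s,i}[\lambda^{(s)}_i]_q!$. Standard $\lambda$-tableaux: bijections $[\lambda]\to\{1,\dots,n\}$ increasing along rows and columns of each component; $\mathfrak S_n$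 acts on the right on entries. $\mathfrak t^\lambda$: $1,\dots,n$ along rows of component $1$, then $2$, …; $\mathfrak t_\lambda$: $1,\dots,n$ down the columns (left to right) of component $r$, then $r-1$, …, then $1$; $w_\lambda$ is defined by $\mathfrak t_\lambda=\mathfrak t^\lambda w_\lambda$, $\ell$ is Coxeter length. $\mathrm{res}_{\mathfrak t}(k)=q^{j-i}Q_c$ if $k$ is in row $i$, column $j$, component $c$. Dominance: for multipartitions $\lambda\trianglerighteq\mu$ iff $\sum_{t<s}|\lambda^{(t)}|+\sum_{j\le i}\lambda^{(s)}_j\ge\sum_{t<s}|\mu^{(t)}|+\sum_{j\le i}\mu^{(s)}_j$ for all $s,i$; for standard tableaux $\mathfrak s\trianglerighteq\mathfrak t$ iff $\mathrm{Shape}(\mathfrak s\downarrow k)\trianglerighteq\mathrm{Shape}(\mathfrak t\downarrow k)$ for all $k$ ($\mathfrak t\downarrow k$ = subtableau with entries $\le k$); $\triangleright$ means $\trianglerighteq$ and $\ne$. The scalars $\gamma_{\mathfrak t}$ ($\mathfrak t\in\mathrm{Std}(\lambda)$) are defined by $\gamma_{\mathfrak t^\lambda}=[\lambda]_q!\prod_{1\le s<t\le r}\prod_{(i,j)\in[\lambda^{(s)}]}(q^{j-i}Q_s-Q_t)$ and $\gamma_{\mathfrak t}=\frac{(q\,\mathrm{res}_{\mathfrak s}(i)-\mathrm{res}_{\mathfrak t}(i))(\mathrm{res}_{\mathfrak s}(i)-q\,\mathrm{res}_{\mathfrak t}(i))}{(\mathrm{res}_{\mathfrak s}(i)-\mathrm{res}_{\mathfrak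 t}(i))^2}\gamma_{\mathfrak s}$ whenever $\mathfrak s=\mathfrak t(i,i+1)\triangleright\mathfrak t$ with both standard. *)

theory Defs
  imports Complex_Main "HOL-Library.Poly_Mapping" "HOL-Computational_Algebra.Fraction_Field"
    "HOL-Combinatorics.Transposition"
begin

text \<open>Multivariate polynomials over the rationals in the indeterminates X_0, X_1, X_2, ...
  (monomials are finitely supported exponent vectors), and their fraction field.\<close>

type_synonym ratfun = "((nat \<Rightarrow>\<^sub>0 nat) \<Rightarrow>\<^sub>0 rat) fract"

definition Xvar :: "nat \<Rightarrow> ratfun" where
  "Xvar i = Fract (Poly_Mapping.single (Poly_Mapping.single i 1) 1) 1"

definition qv :: ratfun where "qv = Xvar 0"

definition Qv :: "nat \<Rightarrow> ratfun" where "Qv s = Xvar s"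

text \<open>A multipartition with r components is a list of r partitions; component s (1-based)
  is the list lam ! (s-1), a weakly decreasing list of positive parts.\<close>

definition is_partition :: "nat list \<Rightarrow> bool" where
  "is_partition p \<longleftrightarrow> sorted_wrt (\<ge>) p \<and> (\<forall>x\<in>set p. 0 < x)"

definition is_multipartition :: "nat \<Rightarrow> nat \<Rightarrow> nat list list \<Rightarrow> bool" where
  "is_multipartition r n lam \<longleftrightarrow> length lam = r \<and> (\<forall>p\<in>set lam. is_partition p)
     \<and> (\<Sum>p\<leftarrow>lam. sum_list p) = n"

definition rowlen :: "nat list list \<Rightarrow> nat \<Rightarrow> nat \<Rightarrow> nat" where
  "rowlen lam s i = (if 1 \<le> s \<and> s \<le> length lam \<and> 1 \<le> i \<and> i \<le> length (lam ! (s-1))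
                     then lam ! (s-1) ! (i-1) else 0)"

definition collen :: "nat list list \<Rightarrow> nat \<Rightarrow> nat \<Rightarrow> nat" where
  "collen lam s j = card {i. 1 \<le> i \<and> j \<le> rowlen lam s i}"

definition compsize :: "nat list list \<Rightarrow> nat \<Rightarrow> nat" where
  "compsize lam s = (if 1 \<le> s \<and> s \<le> length lam then sum_list (lam ! (s-1)) else 0)"

text \<open>The diagram: nodes (i, j, s) = (row, column, component).\<close>
definition diagram :: "nat list list \<Rightarrow> (nat \<times> nat \<times> nat) set" where
  "diagram lam = {(i, j, s). 1 \<le> s \<and> s \<le> length lam \<and> 1 \<le> i \<and> 1 \<le> j \<and> j \<le> rowlen lam s i}"

definition hook :: "nat list list \<Rightarrow> nat \<Rightarrow> nat \<Rightarrow> nat \<Rightarrow> nat" where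
  "hook lam s i j = rowlen lam s i + collen lam s j + 1 - i - j"

definition leg :: "nat list list \<Rightarrow> nat \<Rightarrow> nat \<Rightarrow> nat \<Rightarrow> nat" where
  "leg lam s i j = collen lam s j + 1 - i"

text \<open>A lambda-tableau is a map from nodes to entries, normalised to be 0 off the diagram.\<close>
type_synonym tableau = "nat \<times> nat \<times> nat \<Rightarrow> nat"

definition std_tableau :: "nat list list \<Rightarrow> nat \<Rightarrow> tableau \<Rightarrow> bool" where
  "std_tableau lam n t \<longleftrightarrow>
     bij_betw t (diagram lam) {1..n} \<and> (\<forall>x. x \<notin> diagram lam \<longrightarrow> t x = 0) \<and>
     (\<forall>i j s. (i, j, s) \<in> diagram lam \<and> (i, Suc j, s) \<in> diagram lam \<longrightarrow> t (i, j, s) < t (i, Suc j, s)) \<and>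
     (\<forall>i j s. (i, j, s) \<in> diagram lam \<and> (Suc i, j, s) \<in> diagram lam \<longrightarrow> t (i, j, s) < t (Suc i, j, s))"

definition act_swap :: "tableau \<Rightarrow> nat \<Rightarrow> tableau" where
  "act_swap t k = (\<lambda>x. Transposition.transpose k (Suc k) (t x))"

text \<open>t^\<lambda>: 1..n along the rows of component 1, then component 2, ...\<close>
definition t_row :: "nat list list \<Rightarrow> tableau" where
  "t_row lam = (\<lambda>(i, j, s). if (i, j, s) \<in> diagram lam then
      (\<Sum>c\<in>{1..<s}. compsize lam c) + (\<Sum>a\<in>{1..<i}. rowlen lam s a) + j else 0)"

text \<open>t_\<lambda>: 1..n down the columns (left to right) of component r, then r-1, ..., then 1.\<close>
definition t_col :: "nat list list \<Rightarrow> tableau" where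
  "t_col lam = (\<lambda>(i, j, s). if (i, j, s) \<in> diagram lam then
      (\<Sum>c\<in>{s<..length lam}. compsize lam c) + (\<Sum>b\<in>{1..<j}. collen lam s b) + i else 0)"

text \<open>w_\<lambda> with t_\<lambda> = t^\<lambda> w_\<lambda> (entry k of t^\<lambda> is replaced by
  w_\<lambda>(k)), and its Coxeter length = number of inversions.\<close>
definition w_lam :: "nat list list \<Rightarrow> nat \<Rightarrow> nat" where
  "w_lam lam k = t_col lam (inv_into (diagram lam) (t_row lam) k)"

definition coxeter_length :: "nat \<Rightarrow> (nat \<Rightarrow> nat) \<Rightarrow> nat" where
  "coxeter_length n w = card {(a, b). 1 \<le> a \<and> a < b \<and> b \<le> n \<and> w b < w a}"

definition res :: "nat list list \<Rightarrow> tableau \<Rightarrow> nat \<Rightarrow> ratfun" where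
  "res lam t k = (case inv_into (diagram lam) t k of (i, j, c) \<Rightarrow>
      qv powi (int j - int i) * Qv c)"

text \<open>Dominance of multipartitions, stated on their diagrams (sets of nodes):
  the quantity \<Sum>_{t<s} |\<lambda>^(t)| + \<Sum>_{j\<le>i} \<lambda>^(s)_j is the number of nodes
  lying in a component t < s, or in component s in a row j \<le> i.\<close>
definition partial_count :: "(nat \<times> nat \<times> nat) set \<Rightarrow> nat \<Rightarrow> nat \<Rightarrow> nat" where
  "partial_count D s i = card {(a, b, c) \<in> D. c < s \<or> (c = s \<and> a \<le> i)}"

definition dominates :: "nat \<Rightarrow> (nat \<times> nat \<times> nat) set \<Rightarrow> (nat \<times> nat \<times> nat) set \<Rightarrow> bool" where
  "dominates r D E \<longleftrightarrow> (\<forall>s i. 1 \<le> s \<and> s \<le> r \<and> 1 \<le> i \<longrightarrow> partial_count E s i \<le> partial_count D s i)"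

definition shape_down :: "nat list list \<Rightarrow> tableau \<Rightarrow> nat \<Rightarrow> (nat \<times> nat \<times> nat) set" where
  "shape_down lam t k = {x \<in> diagram lam. t x \<le> k}"

definition tab_dominates :: "nat list list \<Rightarrow> nat \<Rightarrow> tableau \<Rightarrow> tableau \<Rightarrow> bool" where
  "tab_dominates lam n s t \<longleftrightarrow>
     (\<forall>k \<in> {1..n}. dominates (length lam) (shape_down lam s k) (shape_down lam t k))"

definition tab_strictly_dominates :: "nat list list \<Rightarrow> nat \<Rightarrow> tableau \<Rightarrow> tableau \<Rightarrow> bool" where
  "tab_strictly_dominates lam n s t \<longleftrightarrow> tab_dominates lam n s t \<and> s \<noteq> t"

definition qint :: "nat \<Rightarrow> ratfun" where
  "qint k = (\<Sum>a<k. qv ^ a)"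

definition qfact :: "nat \<Rightarrow> ratfun" where
  "qfact k = (\<Prod>a\<in>{1..k}. qint a)"

definition qfact_mp :: "nat list list \<Rightarrow> ratfun" where
  "qfact_mp lam = (\<Prod>s\<in>{1..length lam}. \<Prod>i\<in>{1..length (lam ! (s-1))}. qfact (rowlen lam s i))"

definition gamma_init :: "nat list list \<Rightarrow> ratfun" where
  "gamma_init lam = qfact_mp lam *
     (\<Prod>s\<in>{1..length lam}. \<Prod>t\<in>{s<..length lam}.
        \<Prod>(i, j, c)\<in>{x \<in> diagram lam. snd (snd x) = s}. qv powi (int j - int i) * Qv s - Qv t)"

definition is_gamma :: "nat list list \<Rightarrow> nat \<Rightarrow> (tableau \<Rightarrow> ratfun) \<Rightarrow> bool" where
  "is_gamma lam n g \<longleftrightarrow>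
     g (t_row lam) = gamma_init lam \<and>
     (\<forall>s t i. std_tableau lam n s \<and> std_tableau lam n t \<and> 1 \<le> i \<and> i < n \<and>
        s = act_swap t i \<and> tab_strictly_dominates lam n s t \<longrightarrow>
        g t = (qv * res lam s i - res lam t i) * (res lam s i - qv * res lam t i)
               / (res lam s i - res lam t i)\<^sup>2 * g s)"

definition gamma_formula :: "nat list list \<Rightarrow> nat \<Rightarrow> ratfun" where
  "gamma_formula lam n = qv ^ coxeter_length n (w_lam lam) *
    (\<Prod>(i, j, s)\<in>diagram lam.
       qint (hook lam s i j) / qint (leg lam s i j) *
       (\<Prod>t\<in>{s<..length lam}.
          (qv powi (int j - int i) * Qv s - qv ^ rowlen lam t 1 * Qv t) *
          (\<Prod>k\<in>{1..rowlen lam t 1}.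
             (qv powi (int j - int i) * Qv s - qv powi (int k - 1 - int (collen lam t k)) * Qv t) /
             (qv powi (int j - int i) * Qv s - qv powi (int k - int (collen lam t k)) * Qv t))))"

end

theory Submission
  imports Defs
begin


lemma Fract1_eq: "(Fract (a::'a::idom) 1 = Fract b 1) \<longleftrightarrow> a = b"
  by (simp add: eq_fract)

lemma Xvar_pow: "Xvar i ^ k = Fract (Poly_Mapping.single (Poly_Mapping.single i k) 1) 1"
proof (induction k)
  case 0 then show ?case by (simp add: One_fract_def)
next
  case (Suc k)
  then show ?case by (simp add: Xvar_def mult_single single_add[symmetric])
qed

lemma mono_mult: "Fract (Poly_Mapping.single m 1) 1 * Fract (Poly_Mapping.single m' 1) 1
   = (Fract (Poly_Mapping.single (m + m') (1::rat)) 1 :: ratfun)"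
  by (simp add: mult_single)

lemma qv_nz: "qv \<noteq> 0"
proof
  assume "qv = 0"
  then have "Fract (Poly_Mapping.single (Poly_Mapping.single (0::nat) (1::nat)) (1::rat)) 1 = Fract 0 1"
    by (simp add: qv_def Xvar_def Zero_fract_def)
  then have "Poly_Mapping.single (Poly_Mapping.single (0::nat) (1::nat)) (1::rat) = 0"
    by (simp add: Fract1_eq)
  then show False by (metis lookup_single_eq lookup_zero one_neq_zero)
qed

lemma Qv_nz: "Qv s \<noteq> 0"
proof
  assume "Qv s = 0"
  then have "Fract (Poly_Mapping.single (Poly_Mapping.single s (1::nat)) (1::rat)) 1 = Fract 0 1"
    by (simp add: Qv_def Xvar_def Zero_fract_def)
  then have "Poly_Mapping.single (Poly_Mapping.single s (1::nat)) (1::rat) = 0"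
    by (simp add: Fract1_eq)
  then show False by (metis lookup_single_eq lookup_zero one_neq_zero)
qed

lemma qpow_ne1: "k > 0 \<Longrightarrow> qv ^ k \<noteq> 1"
proof
  assume k: "k > 0" and "qv ^ k = 1"
  then have "Fract (Poly_Mapping.single (Poly_Mapping.single (0::nat) k) (1::rat)) 1 = Fract 1 1"
    by (simp add: qv_def Xvar_pow One_fract_def)
  then have "Poly_Mapping.single (Poly_Mapping.single (0::nat) k) (1::rat) = Poly_Mapping.single 0 1"
    by (simp add: Fract1_eq)
  then have "Poly_Mapping.lookup (Poly_Mapping.single (Poly_Mapping.single (0::nat) k) (1::rat)) (Poly_Mapping.single 0 k)
      = Poly_Mapping.lookup (Poly_Mapping.single 0 1) (Poly_Mapping.single (0::nat) k)" by simp
  moreover have "Poly_Mapping.single (0::nat) k \<noteq> 0" using k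
    by (metis lookup_single_eq lookup_zero neq0_conv)
  ultimately show False by (simp add: lookup_single when_def del: single_one)
qed

lemma qpowi_ne1: assumes "e \<noteq> 0" shows "qv powi e \<noteq> 1"
proof (cases "e > 0")
  case True
  then show ?thesis using qpow_ne1[of "nat e"] by (simp add: power_int_def)
next
  case False
  with assms have "nat (-e) > 0" by simp
  then have "qv ^ nat (-e) \<noteq> 1" using qpow_ne1 by blast
  then show ?thesis using False
    by (auto simp add: power_int_def power_inverse)
qed

lemma single_key_eq:
  assumes "Poly_Mapping.single k (1::rat) = Poly_Mapping.single k' 1"
  shows "k = k'"
proof (rule ccontr)
  assume "k \<noteq> k'"
  have "Poly_Mapping.lookup (Poly_Mapping.single k (1::rat)) k = Poly_Mapping.lookup (Poly_Mapping.single k' 1) k" using assms by simp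
  then show False using \<open>k \<noteq> k'\<close> by (simp add: lookup_single when_def)
qed

lemma QQ_ne_aux:
  assumes "s \<noteq> t" "s \<ge> 1"
  shows "qv ^ A * Qv s \<noteq> qv ^ B * Qv t"
proof
  assume "qv ^ A * Qv s = qv ^ B * Qv t"
  then have "Fract (Poly_Mapping.single (Poly_Mapping.single 0 A + Poly_Mapping.single s 1) (1::rat)) 1
     = Fract (Poly_Mapping.single (Poly_Mapping.single 0 B + Poly_Mapping.single t 1) (1::rat)) 1"
    by (simp only: qv_def Qv_def Xvar_pow) (simp add: Xvar_def mult_single)
  then have "Poly_Mapping.single (Poly_Mapping.single 0 A + Poly_Mapping.single s 1) (1::rat)
     = Poly_Mapping.single (Poly_Mapping.single 0 B + Poly_Mapping.single t 1) 1"
    by (simp add: Fract1_eq)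
  then have "Poly_Mapping.single 0 A + Poly_Mapping.single s 1 = Poly_Mapping.single (0::nat) B + Poly_Mapping.single t (1::nat)"
    by (rule single_key_eq)
  then have "Poly_Mapping.lookup (Poly_Mapping.single 0 A + Poly_Mapping.single s 1) s = Poly_Mapping.lookup (Poly_Mapping.single (0::nat) B + Poly_Mapping.single t (1::nat)) s"
    by simp
  then show False using assms by (simp add: lookup_add lookup_single when_def)
qed

lemma QQ_ne:
  assumes "s \<noteq> t" "s \<ge> 1"
  shows "qv powi a * Qv s \<noteq> qv powi b * Qv t"
proof
  assume h: "qv powi a * Qv s = qv powi b * Qv t"
  define N where "N = \<bar>a\<bar> + \<bar>b\<bar>"
  have "qv powi N * (qv powi a * Qv s) = qv powi N * (qv powi b * Qv t)" using h by simp
  then have "qv powi (N + a) * Qv s = qv powi (N + b) * Qv t"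
    using qv_nz by (simp add: power_int_add mult.assoc)
  moreover have "qv powi (N + a) = qv ^ nat (N + a)" "qv powi (N + b) = qv ^ nat (N + b)"
    unfolding N_def by (simp_all add: power_int_def)
  ultimately have "qv ^ nat (N + a) * Qv s = qv ^ nat (N + b) * Qv t" by simp
  then show False using QQ_ne_aux[OF assms] by blast
qed


definition PP :: "nat \<Rightarrow> ratfun" where "PP k = qv ^ k - 1"

lemma PP_nz: "k > 0 \<Longrightarrow> PP k \<noteq> 0"
  using qpow_ne1 by (simp add: PP_def)

lemma qint_PP: "qint k = PP k / PP 1"
proof -
  have "PP 1 \<noteq> 0" by (simp add: PP_nz)
  moreover have "qint k * PP 1 = PP k"
    unfolding qint_def PP_def by (induction k) (simp_all add: algebra_simps)
  ultimately show ?thesis by (simp add: field_simps)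
qed

lemma inner_tel:
  assumes "u \<ge> 1"
  shows "(\<Prod>v\<in>{1..L}. PP (u+v+1) * PP (u+v-1) / PP (u+v)^2) = PP (u+L+1) * PP u / (PP (u+1) * PP (u+L))"
proof (induction L)
  case 0
  have "PP u \<noteq> 0" "PP (u+1) \<noteq> 0" using assms by (auto intro!: PP_nz)
  then show ?case by simp
next
  case (Suc L)
  have nz: "PP u \<noteq> 0" "PP (u+1) \<noteq> 0" "PP (u+L) \<noteq> 0" "PP (u+L+1) \<noteq> 0" "PP (u+L+2) \<noteq> 0"
    using assms by (auto intro!: PP_nz)
  have "(\<Prod>v\<in>{1..Suc L}. PP (u+v+1) * PP (u+v-1) / PP (u+v)^2)
      = (\<Prod>v\<in>{1..L}. PP (u+v+1) * PP (u+v-1) / PP (u+v)^2) * (PP (u+L+2) * PP (u+L) / PP (u+L+1)^2)"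
    by (simp add: prod.cl_ivl_Suc add.commute add.left_commute)
  also have "\<dots> = PP (u+Suc L+1) * PP u / (PP (u+1) * PP (u+Suc L))"
    using Suc nz by (simp add: field_simps power2_eq_square)
  finally show ?case .
qed

lemma outer_tel:
  "(\<Prod>u\<in>{1..A}. PP (u+L+1) * PP u / (PP (u+1) * PP (u+L))) = PP (A+L+1) * PP 1 / (PP (L+1) * PP (A+1))"
proof (induction A)
  case 0
  have "PP (L+1) \<noteq> 0" "PP 1 \<noteq> 0" by (auto intro!: PP_nz)
  then show ?case by simp
next
  case (Suc A)
  have nz: "PP 1 \<noteq> 0" "PP (L+1) \<noteq> 0" "PP (A+1) \<noteq> 0" "PP (A+2) \<noteq> 0" "PP (A+L+1) \<noteq> 0" "PP (A+L+2) \<noteq> 0"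
    by (auto intro!: PP_nz)
  have "(\<Prod>u\<in>{1..Suc A}. PP (u+L+1) * PP u / (PP (u+1) * PP (u+L)))
      = (\<Prod>u\<in>{1..A}. PP (u+L+1) * PP u / (PP (u+1) * PP (u+L))) * (PP (A+L+2) * PP (A+1) / (PP (A+2) * PP (A+1+L)))"
    by (simp add: prod.cl_ivl_Suc add.commute add.left_commute)
  also have "\<dots> = PP (Suc A+L+1) * PP 1 / (PP (L+1) * PP (Suc A+1))"
    using Suc nz by (simp add: field_simps add.commute add.left_commute)
  finally show ?case .
qed

lemma node_identity:
  "qint (A+1) * (\<Prod>u\<in>{1..A}. \<Prod>v\<in>{1..L}. PP (u+v+1) * PP (u+v-1) / PP (u+v)^2)
    = qint (A+L+1) / qint (L+1)"
proof -
  have "(\<Prod>u\<in>{1..A}. \<Prod>v\<in>{1..L}. PP (u+v+1) * PP (u+v-1) / PP (u+v)^2)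
      = (\<Prod>u\<in>{1..A}. PP (u+L+1) * PP u / (PP (u+1) * PP (u+L)))"
    by (rule prod.cong[OF refl], rule inner_tel) auto
  also have "\<dots> = PP (A+L+1) * PP 1 / (PP (L+1) * PP (A+1))" by (rule outer_tel)
  finally have e: "(\<Prod>u\<in>{1..A}. \<Prod>v\<in>{1..L}. PP (u+v+1) * PP (u+v-1) / PP (u+v)^2) = PP (A+L+1) * PP 1 / (PP (L+1) * PP (A+1))" .
  have nz: "PP 1 \<noteq> 0" "PP (L+1) \<noteq> 0" "PP (A+1) \<noteq> 0" by (auto intro!: PP_nz)
  show ?thesis unfolding e qint_PP using nz by (simp add: field_simps)
qed

lemma col_tel:
  fixes K :: "int \<Rightarrow> ratfun"
  assumes nz: "\<And>m. K m \<noteq> 0"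
  shows "(\<Prod>c\<in>{1..L}. K (d - int c - 1) * K (d - int c + 1) / K (d - int c)^2)
     = K (d - int L - 1) * K d / (K (d - int L) * K (d - 1))"
proof (induction L)
  case 0
  then show ?case using nz by simp
next
  case (Suc L)
  have "(\<Prod>c\<in>{1..Suc L}. K (d - int c - 1) * K (d - int c + 1) / K (d - int c)^2)
     = (\<Prod>c\<in>{1..L}. K (d - int c - 1) * K (d - int c + 1) / K (d - int c)^2)
       * (K (d - int L - 2) * K (d - int L) / K (d - int L - 1)^2)"
    by (simp add: prod.cl_ivl_Suc algebra_simps)
  also have "\<dots> = K (d - int (Suc L) - 1) * K d / (K (d - int (Suc L)) * K (d - 1))"
    using Suc nz[of "d - int L - 1"] nz[of "d - int L"] nz[of "d"] nz[of "d-1"] nz[of "d - int L - 2"]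
    by (simp add: field_simps power2_eq_square algebra_simps)
  finally show ?case .
qed

lemma row_tel:
  fixes K :: "int \<Rightarrow> ratfun"
  assumes nz: "\<And>m. K m \<noteq> 0"
  shows "(\<Prod>d\<in>{1..M}. F d * (K (int d) / K (int d - 1))) = (\<Prod>d\<in>{1..M}. F d) * (K (int M) / K 0)"
proof (induction M)
  case 0
  then show ?case using nz by simp
next
  case (Suc M)
  then show ?case using nz[of "int M"] nz[of 0]
    by (simp add: prod.cl_ivl_Suc field_simps)
qed


lemma down_closed_interval:
  fixes S :: "nat set"
  assumes "finite S" "\<forall>i\<in>S. 1 \<le> i" "\<forall>i\<in>S. \<forall>i'. 1 \<le> i' \<and> i' \<le> i \<longrightarrow> i' \<in> S"
  shows "S = {1..card S}"
proof (cases "S = {}")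
  case True then show ?thesis by simp
next
  case False
  define m where "m = Max S"
  have mS: "m \<in> S" using False assms(1) m_def by simp
  have "S = {1..m}"
  proof
    show "S \<subseteq> {1..m}" using assms(1,2) m_def by auto
    show "{1..m} \<subseteq> S" using assms(3) mS by auto
  qed
  then show ?thesis by simp
qed

locale MP =
  fixes r n :: nat and lam :: "nat list list"
  assumes mp: "is_multipartition r n lam"
begin

lemma len_lam: "length lam = r"
  using mp by (simp add: is_multipartition_def)

lemma part: "1 \<le> s \<Longrightarrow> s \<le> r \<Longrightarrow> is_partition (lam ! (s-1))"
  using mp len_lam by (simp add: is_multipartition_def)

lemma sum_n: "(\<Sum>s\<in>{1..r}. sum_list (lam ! (s-1))) = n"
proof -
  have "n = sum_list (map sum_list lam)" using mp by (simp add: is_multipartition_def)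
  also have "\<dots> = (\<Sum>i<r. sum_list (lam ! i))"
    by (simp add: sum_list_sum_nth len_lam atLeast0LessThan)
  also have "\<dots> = (\<Sum>s\<in>{1..r}. sum_list (lam ! (s-1)))"
  proof (rule sum.reindex_bij_witness[of _ "\<lambda>s. s - 1" "Suc"]) qed auto
  finally show ?thesis by simp
qed

lemma rowlen_mono:
  assumes "1 \<le> i" "i \<le> i'"
  shows "rowlen lam s i' \<le> rowlen lam s i"
proof (cases "1 \<le> s \<and> s \<le> r \<and> i' \<le> length (lam ! (s-1))")
  case True
  then have sw: "sorted_wrt (\<ge>) (lam ! (s-1))" using part by (simp add: is_partition_def)
  show ?thesis
  proof (cases "i = i'")
    case False
    then have "i - 1 < i' - 1" using assms by simp
    then have "lam ! (s-1) ! (i'-1) \<le> lam ! (s-1) ! (i-1)"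
      using sorted_wrt_nth_less[OF sw] True by auto
    then show ?thesis using True assms by (simp add: rowlen_def len_lam)
  qed simp
next
  case False
  then show ?thesis using assms by (auto simp: rowlen_def len_lam)
qed

lemma rowlen_pos:
  assumes "1 \<le> s" "s \<le> r" "1 \<le> i" "i \<le> length (lam ! (s-1))"
  shows "rowlen lam s i > 0"
proof -
  have "lam ! (s-1) ! (i-1) \<in> set (lam ! (s-1))" using assms by simp
  then have "lam ! (s-1) ! (i-1) > 0" using part[OF assms(1,2)] by (simp add: is_partition_def)
  then show ?thesis using assms by (simp add: rowlen_def len_lam)
qed

lemma rowlen_zero: "length (lam ! (s-1)) < i \<Longrightarrow> rowlen lam s i = 0"
  by (simp add: rowlen_def)

lemma inD: "(i, j, s) \<in> diagram lam \<longleftrightarrow> 1 \<le> s \<and> s \<le> r \<and> 1 \<le> i \<and> 1 \<le> j \<and> j \<le> rowlen lam s i"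
  by (simp add: diagram_def len_lam)

lemma len_bound: "1 \<le> j \<Longrightarrow> j \<le> rowlen lam s i \<Longrightarrow> i \<le> length (lam ! (s-1))"
proof (rule ccontr)
  assume "1 \<le> j" "j \<le> rowlen lam s i" "\<not> i \<le> length (lam ! (s-1))"
  then have "rowlen lam s i = 0" using rowlen_zero by simp
  with \<open>1 \<le> j\<close> \<open>j \<le> rowlen lam s i\<close> show False by simp
qed

lemma inD_len: "(i, j, s) \<in> diagram lam \<Longrightarrow> i \<le> length (lam ! (s-1))"
  using len_bound by (auto simp: inD) 

lemma collen_iff:
  assumes "1 \<le> j" "1 \<le> i"
  shows "j \<le> rowlen lam s i \<longleftrightarrow> i \<le> collen lam s j"
proof -
  define S where "S = {i. 1 \<le> i \<and> j \<le> rowlen lam s i}"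
  have sub: "S \<subseteq> {1..length (lam ! (s-1))}"
  proof
    fix x assume "x \<in> S"
    then have "1 \<le> x" "j \<le> rowlen lam s x" by (auto simp: S_def)
    then show "x \<in> {1..length (lam ! (s-1))}" using len_bound[OF assms(1)] by auto
  qed
  then have fin: "finite S" by (rule finite_subset) simp
  have "S = {1..card S}"
  proof (rule down_closed_interval[OF fin])
    show "\<forall>i\<in>S. 1 \<le> i" by (simp add: S_def)
    show "\<forall>i\<in>S. \<forall>i'. 1 \<le> i' \<and> i' \<le> i \<longrightarrow> i' \<in> S"
    proof (intro ballI allI impI)
      fix i i' assume "i \<in> S" "1 \<le> i' \<and> i' \<le> i"
      then show "i' \<in> S" using rowlen_mono[of i' i s] by (auto simp: S_def)
    qed
  qed
  moreover have "collen lam s j = card S" by (simp add: collen_def S_def)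
  ultimately have "S = {1..collen lam s j}" by simp
  then have "i \<in> S \<longleftrightarrow> i \<in> {1..collen lam s j}" by simp
  then show ?thesis using assms by (simp add: S_def)
qed

definition Ds :: "nat \<Rightarrow> (nat \<times> nat \<times> nat) set" where
  "Ds s = {x \<in> diagram lam. snd (snd x) = s}"

lemma img_iff1: "(i, j, c) \<in> (\<lambda>(i, j). (i, j, s)) ` A \<longleftrightarrow> c = s \<and> (i, j) \<in> A"
  by force

lemma img_iff2: "(i, j, c) \<in> (\<lambda>(j, i). (i, j, s)) ` A \<longleftrightarrow> c = s \<and> (j, i) \<in> A"
  by force

lemma Ds_rows:
  assumes "1 \<le> s" "s \<le> r"
  shows "Ds s = (\<lambda>(i, j). (i, j, s)) ` (SIGMA i:{1..length (lam ! (s-1))}. {1..rowlen lam s i})"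
proof (rule set_eqI)
  fix x :: "nat \<times> nat \<times> nat"
  obtain i j c where x: "x = (i, j, c)" by (cases x) auto
  have "(i, j, c) \<in> Ds s \<longleftrightarrow> c = s \<and> (i, j, s) \<in> diagram lam" by (auto simp: Ds_def)
  also have "\<dots> \<longleftrightarrow> c = s \<and> (i, j) \<in> (SIGMA i:{1..length (lam ! (s-1))}. {1..rowlen lam s i})"
    using assms inD_len[of i j s] by (auto simp: inD)
  finally show "x \<in> Ds s \<longleftrightarrow> x \<in> (\<lambda>(i, j). (i, j, s)) ` (SIGMA i:{1..length (lam ! (s-1))}. {1..rowlen lam s i})"
    unfolding x img_iff1 .
qed

lemma Ds_cols:
  assumes "1 \<le> s" "s \<le> r"
  shows "Ds s = (\<lambda>(j, i). (i, j, s)) ` (SIGMA j:{1..rowlen lam s 1}. {1..collen lam s j})"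
proof -
  have *: "(i, j, s) \<in> diagram lam \<longleftrightarrow> (1 \<le> j \<and> j \<le> rowlen lam s 1 \<and> 1 \<le> i \<and> i \<le> collen lam s j)" for i j
  proof
    assume "(i, j, s) \<in> diagram lam"
    then show "1 \<le> j \<and> j \<le> rowlen lam s 1 \<and> 1 \<le> i \<and> i \<le> collen lam s j"
      using collen_iff[of j i s] rowlen_mono[of 1 i s] by (auto simp: inD)
  next
    assume h: "1 \<le> j \<and> j \<le> rowlen lam s 1 \<and> 1 \<le> i \<and> i \<le> collen lam s j"
    then have "j \<le> rowlen lam s i" using collen_iff[of j i s] by simp
    then show "(i, j, s) \<in> diagram lam" using h assms by (simp add: inD)
  qed
  show ?thesis
  proof (rule set_eqI)
    fix x :: "nat \<times> nat \<times> nat"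
    obtain i j c where x: "x = (i, j, c)" by (cases x) auto
    have "(i, j, c) \<in> Ds s \<longleftrightarrow> c = s \<and> (i, j, s) \<in> diagram lam" by (auto simp: Ds_def)
    also have "\<dots> \<longleftrightarrow> c = s \<and> (j, i) \<in> (SIGMA j:{1..rowlen lam s 1}. {1..collen lam s j})"
      using *[of i j] by auto
    finally show "x \<in> Ds s \<longleftrightarrow> x \<in> (\<lambda>(j, i). (i, j, s)) ` (SIGMA j:{1..rowlen lam s 1}. {1..collen lam s j})"
      unfolding x img_iff2 .
  qed
qed

lemma card_Ds_rows:
  assumes "1 \<le> s" "s \<le> r"
  shows "card (Ds s) = compsize lam s"
proof -
  have "card (Ds s) = card (SIGMA i:{1..length (lam ! (s-1))}. {1..rowlen lam s i})"
    unfolding Ds_rows[OF assms] by (rule card_image) (auto simp: inj_on_def)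
  also have "\<dots> = (\<Sum>i\<in>{1..length (lam ! (s-1))}. rowlen lam s i)" by simp
  also have "\<dots> = (\<Sum>i<length (lam ! (s-1)). lam ! (s-1) ! i)"
  proof (rule sum.reindex_bij_witness[of _ "Suc" "\<lambda>i. i - 1"]) 
  qed (use assms in \<open>auto simp: rowlen_def len_lam\<close>)
  also have "\<dots> = compsize lam s" using assms by (simp add: compsize_def sum_list_sum_nth len_lam atLeast0LessThan)
  finally show ?thesis .
qed

lemma card_Ds_cols:
  assumes "1 \<le> s" "s \<le> r"
  shows "card (Ds s) = (\<Sum>j\<in>{1..rowlen lam s 1}. collen lam s j)"
proof -
  have "card (Ds s) = card (SIGMA j:{1..rowlen lam s 1}. {1..collen lam s j})"
    unfolding Ds_cols[OF assms] by (rule card_image) (auto simp: inj_on_def)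
  also have "\<dots> = (\<Sum>j\<in>{1..rowlen lam s 1}. collen lam s j)" by simp
  finally show ?thesis .
qed

lemma D_union: "diagram lam = (\<Union>s\<in>{1..r}. Ds s)"
  by (auto simp: Ds_def inD)

lemma Ds_finite: "finite (Ds s)"
proof (cases "1 \<le> s \<and> s \<le> r")
  case True then show ?thesis by (simp add: Ds_rows)
next
  case False then have "Ds s = {}" by (auto simp: Ds_def inD)
  then show ?thesis by simp
qed

lemma D_finite: "finite (diagram lam)"
  unfolding D_union using Ds_finite by auto

lemma card_D: "card (diagram lam) = n"
proof -
  have "card (diagram lam) = (\<Sum>s\<in>{1..r}. card (Ds s))"
    unfolding D_union by (rule card_UN_disjoint) (use Ds_finite in \<open>auto simp: Ds_def\<close>)
  also have "\<dots> = (\<Sum>s\<in>{1..r}. compsize lam s)" by (rule sum.cong) (auto simp: card_Ds_rows)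
  also have "\<dots> = n" using sum_n by (simp add: compsize_def len_lam)
  finally show ?thesis .
qed

lemma sum_compsize: "(\<Sum>s\<in>{1..r}. compsize lam s) = n"
  using sum_n by (simp add: compsize_def len_lam)

end


context MP begin

lemma compsize_rows:
  assumes "1 \<le> s" "s \<le> r"
  shows "compsize lam s = (\<Sum>i\<in>{1..length (lam ! (s-1))}. rowlen lam s i)"
proof -
  have "(\<Sum>i\<in>{1..length (lam ! (s-1))}. rowlen lam s i) = (\<Sum>i<length (lam ! (s-1)). lam ! (s-1) ! i)"
  proof (rule sum.reindex_bij_witness[of _ "Suc" "\<lambda>i. i - 1"]) 
  qed (use assms in \<open>auto simp: rowlen_def len_lam\<close>)
  also have "\<dots> = compsize lam s" using assms by (simp add: compsize_def sum_list_sum_nth len_lam atLeast0LessThan)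
  finally show ?thesis by simp
qed

lemma compsize_cols:
  assumes "1 \<le> s" "s \<le> r"
  shows "compsize lam s = (\<Sum>j\<in>{1..rowlen lam s 1}. collen lam s j)"
  using card_Ds_rows[OF assms] card_Ds_cols[OF assms] by simp

definition RR :: "nat \<Rightarrow> nat \<Rightarrow> nat" where "RR s i = (\<Sum>a\<in>{1..<i}. rowlen lam s a)"
definition RB :: "nat \<Rightarrow> nat" where "RB s = (\<Sum>c\<in>{1..<s}. compsize lam c)"
definition CC :: "nat \<Rightarrow> nat \<Rightarrow> nat" where "CC s j = (\<Sum>b\<in>{1..<j}. collen lam s b)"
definition CB :: "nat \<Rightarrow> nat" where "CB s = (\<Sum>c\<in>{s<..r}. compsize lam c)"

lemma t_row_eq: "(i, j, s) \<in> diagram lam \<Longrightarrow> t_row lam (i, j, s) = RB s + RR s i + j"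
  by (simp add: t_row_def RB_def RR_def)

lemma t_col_eq: "(i, j, s) \<in> diagram lam \<Longrightarrow> t_col lam (i, j, s) = CB s + CC s j + i"
  by (simp add: t_col_def CB_def CC_def len_lam)

lemma sum_le_support:
  fixes f :: "nat \<Rightarrow> nat"
  assumes "finite B" "\<forall>a\<in>A - B. f a = 0" "finite A"
  shows "sum f A \<le> sum f B"
proof -
  have "sum f A \<le> sum f (A \<union> B)" by (rule sum_mono2) (use assms in auto)
  also have "\<dots> = sum f B" by (rule sum.mono_neutral_right) (use assms in auto)
  finally show ?thesis .
qed

lemma RR_le: assumes "1 \<le> s" "s \<le> r" shows "RR s i \<le> compsize lam s"
  unfolding RR_def compsize_rows[OF assms]
  by (rule sum_le_support) (auto simp: rowlen_zero)

lemma RR_mono: "i \<le> i' \<Longrightarrow> RR s i \<le> RR s i'"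
  unfolding RR_def by (rule sum_mono2) auto

lemma RR_Suc: "1 \<le> i \<Longrightarrow> RR s (Suc i) = RR s i + rowlen lam s i"
  unfolding RR_def by simp

lemma RB_Suc: "1 \<le> s \<Longrightarrow> RB (Suc s) = RB s + compsize lam s"
  unfolding RB_def by simp

lemma RB_mono: "s \<le> s' \<Longrightarrow> RB s \<le> RB s'"
  unfolding RB_def by (rule sum_mono2) auto

lemma RB_r: "RB (Suc r) = n"
  unfolding RB_def using sum_compsize by (simp add: atLeastLessThanSuc_atLeastAtMost)

lemma CC_le: assumes "1 \<le> s" "s \<le> r" "j \<le> Suc (rowlen lam s 1)" shows "CC s j \<le> compsize lam s"
  unfolding CC_def compsize_cols[OF assms(1,2)]
  by (rule sum_mono2) (use assms(3) in auto)

lemma CC_mono: "j \<le> j' \<Longrightarrow> CC s j \<le> CC s j'"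
  unfolding CC_def by (rule sum_mono2) auto

lemma CC_Suc: "1 \<le> j \<Longrightarrow> CC s (Suc j) = CC s j + collen lam s j"
  unfolding CC_def by simp

lemma CB_step: assumes "s < t" "t \<le> r" shows "CB t + compsize lam t \<le> CB s"
proof -
  have "CB t + compsize lam t = (\<Sum>c\<in>insert t {t<..r}. compsize lam c)"
    unfolding CB_def by simp
  also have "\<dots> \<le> CB s" unfolding CB_def by (rule sum_mono2) (use assms in auto)
  finally show ?thesis .
qed

lemma CB_n: assumes "1 \<le> s" "s \<le> r" shows "CB s + compsize lam s \<le> n"
proof -
  have "CB s + compsize lam s = (\<Sum>c\<in>insert s {s<..r}. compsize lam c)"
    unfolding CB_def by simp
  also have "\<dots> \<le> (\<Sum>c\<in>{1..r}. compsize lam c)" by (rule sum_mono2) (use assms in auto)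
  finally show ?thesis using sum_compsize by simp
qed

lemma in_row_bounds:
  assumes "(i, j, s) \<in> diagram lam"
  shows "RR s i < RR s i + j" "RR s i + j \<le> RR s (Suc i)" "RR s (Suc i) \<le> compsize lam s"
  using assms RR_Suc[of i s] RR_le[of s "Suc i"] by (auto simp: inD)

lemma in_col_bounds:
  assumes "(i, j, s) \<in> diagram lam"
  shows "CC s j < CC s j + i" "CC s j + i \<le> CC s (Suc j)" "CC s (Suc j) \<le> compsize lam s"
proof -
  have h: "1 \<le> s" "s \<le> r" "1 \<le> i" "1 \<le> j" "j \<le> rowlen lam s i" using assms by (auto simp: inD)
  then have "i \<le> collen lam s j" using collen_iff by simp
  moreover have "j \<le> rowlen lam s 1" using h rowlen_mono[of 1 i s] by simp
  ultimately show "CC s j < CC s j + i" "CC s j + i \<le> CC s (Suc j)" "CC s (Suc j) \<le> compsize lam s"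
    using h CC_Suc[of j s] CC_le[of s "Suc j"] by auto
qed

fun rowlex :: "nat \<times> nat \<times> nat \<Rightarrow> nat \<times> nat \<times> nat \<Rightarrow> bool" where
  "rowlex (a, b, s) (c, d, t) \<longleftrightarrow> s < t \<or> (s = t \<and> a < c) \<or> (s = t \<and> a = c \<and> b < d)"

fun collex :: "nat \<times> nat \<times> nat \<Rightarrow> nat \<times> nat \<times> nat \<Rightarrow> bool" where
  "collex (a, b, s) (c, d, t) \<longleftrightarrow> t < s \<or> (s = t \<and> b < d) \<or> (s = t \<and> b = d \<and> a < c)"

lemma t_row_mono:
  assumes "y \<in> diagram lam" "x \<in> diagram lam" "rowlex y x"
  shows "t_row lam y < t_row lam x"
proof -
  obtain a b s where y: "y = (a, b, s)" by (cases y) auto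
  obtain c d t where x: "x = (c, d, t)" by (cases x) auto
  note yb = in_row_bounds[OF assms(1)[unfolded y]]
  note xb = in_row_bounds[OF assms(2)[unfolded x]]
  have s1: "1 \<le> s" "1 \<le> a" using assms(1) y by (auto simp: inD)
  consider "s < t" | "s = t" "a < c" | "s = t" "a = c" "b < d" using assms(3) x y by auto
  then show ?thesis
  proof cases
    case 1
    have "t_row lam y \<le> RB s + compsize lam s" using yb t_row_eq assms(1) y by simp
    also have "\<dots> = RB (Suc s)" using RB_Suc s1 by simp
    also have "\<dots> \<le> RB t" using 1 RB_mono by simp
    also have "\<dots> < t_row lam x" using t_row_eq assms(2) x xb by simp
    finally show ?thesis .
  next
    case 2
    have "t_row lam y \<le> RB s + RR s (Suc a)" using yb t_row_eq assms(1) y by simp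
    also have "\<dots> \<le> RB s + RR s c" using 2 RR_mono[of "Suc a" c s] by simp
    also have "\<dots> < t_row lam x" using t_row_eq assms(2) x xb 2 by simp
    finally show ?thesis .
  next
    case 3
    then show ?thesis using t_row_eq assms x y by simp
  qed
qed

lemma t_col_mono:
  assumes "y \<in> diagram lam" "x \<in> diagram lam" "collex y x"
  shows "t_col lam y < t_col lam x"
proof -
  obtain a b s where y: "y = (a, b, s)" by (cases y) auto
  obtain c d t where x: "x = (c, d, t)" by (cases x) auto
  note yb = in_col_bounds[OF assms(1)[unfolded y]]
  note xb = in_col_bounds[OF assms(2)[unfolded x]]
  have s1: "1 \<le> s" "s \<le> r" "1 \<le> b" using assms(1) y by (auto simp: inD)
  consider "t < s" | "s = t" "b < d" | "s = t" "b = d" "a < c" using assms(3) x y by auto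
  then show ?thesis
  proof cases
    case 1
    have "t_col lam y \<le> CB s + compsize lam s" using yb t_col_eq assms(1) y by simp
    also have "\<dots> \<le> CB t" using CB_step[OF 1 s1(2)] by simp
    also have "\<dots> < t_col lam x" using t_col_eq assms(2) x xb by simp
    finally show ?thesis .
  next
    case 2
    have "t_col lam y \<le> CB s + CC s (Suc b)" using yb t_col_eq assms(1) y by simp
    also have "\<dots> \<le> CB s + CC s d" using 2 CC_mono[of "Suc b" d s] by simp
    also have "\<dots> < t_col lam x" using t_col_eq assms(2) x xb 2 by simp
    finally show ?thesis .
  next
    case 3
    then show ?thesis using t_col_eq assms x y by simp
  qed
qed

lemma rowlex_total: "y \<noteq> x \<Longrightarrow> rowlex y x \<or> rowlex x y"
  by (cases y; cases x) auto

lemma collex_total: "y \<noteq> x \<Longrightarrow> collex y x \<or> collex x y"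
  by (cases y; cases x) auto

lemma t_row_lt_iff:
  assumes "y \<in> diagram lam" "x \<in> diagram lam"
  shows "t_row lam y < t_row lam x \<longleftrightarrow> rowlex y x"
proof
  assume "t_row lam y < t_row lam x"
  then have "y \<noteq> x" by auto
  show "rowlex y x"
  proof (rule ccontr)
    assume "\<not> rowlex y x"
    with \<open>y \<noteq> x\<close> have "rowlex x y" using rowlex_total by blast
    then have "t_row lam x < t_row lam y" using t_row_mono[OF assms(2,1)] by blast
    with \<open>t_row lam y < t_row lam x\<close> show False by simp
  qed
qed (use t_row_mono assms in blast)

lemma t_col_lt_iff:
  assumes "y \<in> diagram lam" "x \<in> diagram lam"
  shows "t_col lam y < t_col lam x \<longleftrightarrow> collex y x"
proof
  assume "t_col lam y < t_col lam x"
  then have "y \<noteq> x" by auto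
  show "collex y x"
  proof (rule ccontr)
    assume "\<not> collex y x"
    with \<open>y \<noteq> x\<close> have "collex x y" using collex_total by blast
    then have "t_col lam x < t_col lam y" using t_col_mono[OF assms(2,1)] by blast
    with \<open>t_col lam y < t_col lam x\<close> show False by simp
  qed
qed (use t_col_mono assms in blast)

lemma t_row_inj: "inj_on (t_row lam) (diagram lam)"
proof (rule inj_onI)
  fix x y assume "x \<in> diagram lam" "y \<in> diagram lam" "t_row lam x = t_row lam y"
  show "x = y"
  proof (rule ccontr)
    assume "x \<noteq> y"
    then have "rowlex x y \<or> rowlex y x" using rowlex_total by blast
    then show False using t_row_mono \<open>x \<in> diagram lam\<close> \<open>y \<in> diagram lam\<close> \<open>t_row lam x = t_row lam y\<close>
      by (metis less_irrefl)
  qed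
qed

lemma t_col_inj: "inj_on (t_col lam) (diagram lam)"
proof (rule inj_onI)
  fix x y assume "x \<in> diagram lam" "y \<in> diagram lam" "t_col lam x = t_col lam y"
  show "x = y"
  proof (rule ccontr)
    assume "x \<noteq> y"
    then have "collex x y \<or> collex y x" using collex_total by blast
    then show False using t_col_mono \<open>x \<in> diagram lam\<close> \<open>y \<in> diagram lam\<close> \<open>t_col lam x = t_col lam y\<close>
      by (metis less_irrefl)
  qed
qed

lemma t_row_range: assumes "x \<in> diagram lam" shows "t_row lam x \<in> {1..n}"
proof -
  obtain i j s where x: "x = (i, j, s)" by (cases x) auto
  note b = in_row_bounds[OF assms[unfolded x]]
  have s: "1 \<le> s" "s \<le> r" using assms x by (auto simp: inD)
  have "t_row lam x \<le> RB s + compsize lam s" using b t_row_eq assms x by simp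
  also have "\<dots> = RB (Suc s)" using RB_Suc s by simp
  also have "\<dots> \<le> RB (Suc r)" using RB_mono s by simp
  finally show ?thesis using RB_r b t_row_eq assms x by simp
qed

lemma t_col_range: assumes "x \<in> diagram lam" shows "t_col lam x \<in> {1..n}"
proof -
  obtain i j s where x: "x = (i, j, s)" by (cases x) auto
  note b = in_col_bounds[OF assms[unfolded x]]
  have s: "1 \<le> s" "s \<le> r" using assms x by (auto simp: inD)
  have "t_col lam x \<le> CB s + compsize lam s" using b t_col_eq assms x by simp
  also have "\<dots> \<le> n" using CB_n s by simp
  finally show ?thesis using b t_col_eq assms x by simp
qed

lemma std_of:
  fixes \<kappa> :: tableau
  assumes zero: "\<forall>x. x \<notin> diagram lam \<longrightarrow> \<kappa> x = 0"
    and range: "\<forall>x\<in>diagram lam. \<kappa> x \<in> {1..n}"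
    and inj: "inj_on \<kappa> (diagram lam)"
    and right: "\<forall>i j s. (i, j, s) \<in> diagram lam \<and> (i, Suc j, s) \<in> diagram lam \<longrightarrow> \<kappa> (i, j, s) < \<kappa> (i, Suc j, s)"
    and down: "\<forall>i j s. (i, j, s) \<in> diagram lam \<and> (Suc i, j, s) \<in> diagram lam \<longrightarrow> \<kappa> (i, j, s) < \<kappa> (Suc i, j, s)"
  shows "std_tableau lam n \<kappa>"
proof -
  have sub: "\<kappa> ` diagram lam \<subseteq> {1..n}" using range by auto
  have "card (\<kappa> ` diagram lam) = card {1..n}" using card_image[OF inj] card_D by simp
  then have "\<kappa> ` diagram lam = {1..n}" using card_subset_eq[OF _ sub] by simp
  then have "bij_betw \<kappa> (diagram lam) {1..n}" using inj by (simp add: bij_betw_def)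
  then show ?thesis using zero right down by (simp add: std_tableau_def)
qed

lemma std_t_row: "std_tableau lam n (t_row lam)"
proof (rule std_of)
  show "\<forall>x. x \<notin> diagram lam \<longrightarrow> t_row lam x = 0" by (auto simp: t_row_def)
  show "\<forall>x\<in>diagram lam. t_row lam x \<in> {1..n}" using t_row_range by blast
  show "inj_on (t_row lam) (diagram lam)" by (rule t_row_inj)
  show "\<forall>i j s. (i, j, s) \<in> diagram lam \<and> (i, Suc j, s) \<in> diagram lam \<longrightarrow> t_row lam (i, j, s) < t_row lam (i, Suc j, s)"
    using t_row_mono by simp
  show "\<forall>i j s. (i, j, s) \<in> diagram lam \<and> (Suc i, j, s) \<in> diagram lam \<longrightarrow> t_row lam (i, j, s) < t_row lam (Suc i, j, s)"
    using t_row_mono by simp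
qed

lemma std_t_col: "std_tableau lam n (t_col lam)"
proof (rule std_of)
  show "\<forall>x. x \<notin> diagram lam \<longrightarrow> t_col lam x = 0" by (auto simp: t_col_def)
  show "\<forall>x\<in>diagram lam. t_col lam x \<in> {1..n}" using t_col_range by blast
  show "inj_on (t_col lam) (diagram lam)" by (rule t_col_inj)
  show "\<forall>i j s. (i, j, s) \<in> diagram lam \<and> (i, Suc j, s) \<in> diagram lam \<longrightarrow> t_col lam (i, j, s) < t_col lam (i, Suc j, s)"
    using t_col_mono by simp
  show "\<forall>i j s. (i, j, s) \<in> diagram lam \<and> (Suc i, j, s) \<in> diagram lam \<longrightarrow> t_col lam (i, j, s) < t_col lam (Suc i, j, s)"
    using t_col_mono by simp
qed

end


definition cr :: "nat \<times> nat \<times> nat \<Rightarrow> ratfun" where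
  "cr = (\<lambda>(i, j, c). qv powi (int j - int i) * Qv c)"

definition Fg :: "nat \<times> nat \<times> nat \<Rightarrow> nat \<times> nat \<times> nat \<Rightarrow> ratfun" where
  "Fg y x = (qv * cr y - cr x) * (cr y - qv * cr x) / (cr y - cr x)\<^sup>2"

lemma transpose_mono:
  fixes v w i :: nat
  assumes "v < w" "\<not> (v = i \<and> w = Suc i)"
  shows "Transposition.transpose i (Suc i) v < Transposition.transpose i (Suc i) w"
  using assms by (auto simp: transpose_def)

lemma transpose_le_iff:
  fixes v k i :: nat
  assumes "k \<noteq> i"
  shows "Transposition.transpose i (Suc i) v \<le> k \<longleftrightarrow> v \<le> k"
  using assms by (auto simp: transpose_def)

context MP begin

definition Inv :: "tableau \<Rightarrow> ((nat \<times> nat \<times> nat) \<times> (nat \<times> nat \<times> nat)) set" where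
  "Inv t = {(y, x). y \<in> diagram lam \<and> x \<in> diagram lam \<and> t_row lam y < t_row lam x \<and> t x < t y}"

lemma Inv_finite: "finite (Inv t)"
proof (rule finite_subset)
  show "Inv t \<subseteq> diagram lam \<times> diagram lam" by (auto simp: Inv_def)
qed (simp add: D_finite)

lemma rank_card:
  assumes "bij_betw f (diagram lam) {1..n}" "x \<in> diagram lam"
  shows "card {z \<in> diagram lam. f z \<le> f x} = f x"
proof -
  have inj: "inj_on f {z \<in> diagram lam. f z \<le> f x}"
    using assms(1) by (auto simp: bij_betw_def intro: inj_on_subset)
  have "f ` {z \<in> diagram lam. f z \<le> f x} = {1..f x}"
  proof
    show "f ` {z \<in> diagram lam. f z \<le> f x} \<subseteq> {1..f x}"
      using assms(1) by (auto simp: bij_betw_def)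
    show "{1..f x} \<subseteq> f ` {z \<in> diagram lam. f z \<le> f x}"
    proof
      fix k assume k: "k \<in> {1..f x}"
      have "f x \<in> {1..n}" using assms by (auto simp: bij_betw_def)
      with k have "k \<in> f ` diagram lam" using assms(1) by (auto simp: bij_betw_def)
      then obtain z where "z \<in> diagram lam" "f z = k" by auto
      then show "k \<in> f ` {z \<in> diagram lam. f z \<le> f x}" using k by auto
    qed
  qed
  then show ?thesis using card_image[OF inj] by simp
qed

lemma t_row_bij: "bij_betw (t_row lam) (diagram lam) {1..n}"
  using std_t_row by (simp add: std_tableau_def)

lemma no_inv_eq:
  assumes std: "std_tableau lam n t" and ni: "Inv t = {}"
  shows "t = t_row lam"
proof
  fix x
  show "t x = t_row lam x"
  proof (cases "x \<in> diagram lam")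
    case False
    have "t x = 0" using std False unfolding std_tableau_def by blast
    moreover have "t_row lam x = 0" using False by (cases x) (simp add: t_row_def)
    ultimately show ?thesis by simp
  next
    case True
    have bt: "bij_betw t (diagram lam) {1..n}" using std by (simp add: std_tableau_def)
    have injt: "inj_on t (diagram lam)" using bt by (simp add: bij_betw_def)
    have injr: "inj_on (t_row lam) (diagram lam)" by (rule t_row_inj)
    have "{z \<in> diagram lam. t z \<le> t x} = {z \<in> diagram lam. t_row lam z \<le> t_row lam x}"
    proof (rule Collect_cong, rule iffI)
      fix z assume h: "z \<in> diagram lam \<and> t z \<le> t x"
      show "z \<in> diagram lam \<and> t_row lam z \<le> t_row lam x"
      proof (rule ccontr)
        assume "\<not> ?thesis"
        with h have lt: "t_row lam x < t_row lam z" by simp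
        then have "z \<noteq> x" by auto
        then have "t z \<noteq> t x" using injt h True by (meson inj_on_contraD)
        with h have "t z < t x" by simp
        then have "(x, z) \<in> Inv t" using lt h True by (simp add: Inv_def)
        with ni show False by simp
      qed
    next
      fix z assume h: "z \<in> diagram lam \<and> t_row lam z \<le> t_row lam x"
      show "z \<in> diagram lam \<and> t z \<le> t x"
      proof (rule ccontr)
        assume "\<not> ?thesis"
        with h have lt: "t x < t z" by simp
        then have "z \<noteq> x" by auto
        then have "t_row lam z \<noteq> t_row lam x" using injr h True by (meson inj_on_contraD)
        with h have "t_row lam z < t_row lam x" by simp
        then have "(z, x) \<in> Inv t" using lt h True by (simp add: Inv_def)
        with ni show False by simp
      qed
    qed
    then show ?thesis using rank_card[OF bt True] rank_card[OF t_row_bij True] by simp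
  qed
qed

lemma adjacent_inv:
  assumes std: "std_tableau lam n t" and ne: "Inv t \<noteq> {}"
  shows "\<exists>y x. (y, x) \<in> Inv t \<and> t y = Suc (t x)"
proof -
  have bt: "bij_betw t (diagram lam) {1..n}" using std by (simp add: std_tableau_def)
  have injt: "inj_on t (diagram lam)" using bt by (simp add: bij_betw_def)
  obtain p0 where "p0 \<in> Inv t" using ne by auto
  then obtain p where p: "p \<in> Inv t" and pmin: "\<forall>p'. p' \<in> Inv t \<longrightarrow> t (fst p) - t (snd p) \<le> t (fst p') - t (snd p')"
    using ex_has_least_nat[of "\<lambda>p. p \<in> Inv t" p0 "\<lambda>p. t (fst p) - t (snd p)"] by blast
  obtain y x where yx: "p = (y, x)" by (cases p) auto
  have yD: "y \<in> diagram lam" and xD: "x \<in> diagram lam" and rl: "t_row lam y < t_row lam x" and tl: "t x < t y"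
    using p yx by (auto simp: Inv_def)
  show ?thesis
  proof (cases "t y = Suc (t x)")
    case True
    then show ?thesis using p yx by blast
  next
    case False
    with tl have gt: "Suc (t x) < t y" by simp
    have "t y \<in> {1..n}" using bt yD by (auto simp: bij_betw_def)
    then have "Suc (t x) \<in> t ` diagram lam" using gt bt by (auto simp: bij_betw_def)
    then obtain z where zD: "z \<in> diagram lam" and tz: "t z = Suc (t x)" by auto
    have "z \<noteq> x" using tz by auto
    then have "t_row lam z \<noteq> t_row lam x" using t_row_inj zD xD by (meson inj_on_contraD)
    then consider "t_row lam z < t_row lam x" | "t_row lam x < t_row lam z" by linarith
    then show ?thesis
    proof cases
      case 1
      then have "(z, x) \<in> Inv t" using zD xD tz by (simp add: Inv_def)
      then show ?thesis using tz by blast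
    next
      case 2
      then have "(y, z) \<in> Inv t" using zD yD tz rl gt by (simp add: Inv_def)
      then have "t y - t x \<le> t y - t z" using pmin yx by fastforce
      then show ?thesis using tz gt by simp
    qed
  qed
qed

lemma res_cr:
  assumes "bij_betw t (diagram lam) {1..n}" "x \<in> diagram lam" "t x = k"
  shows "res lam t k = cr x"
proof -
  have "inv_into (diagram lam) t k = x"
    using assms by (auto simp: bij_betw_def intro: inv_into_f_eq)
  then show ?thesis by (simp add: res_def cr_def)
qed

lemma step:
  assumes std: "std_tableau lam n t" and yx: "(y, x) \<in> Inv t" and adj: "t y = Suc (t x)"
  defines "i \<equiv> t x"
  defines "s \<equiv> act_swap t i"
  shows "std_tableau lam n s" "tab_strictly_dominates lam n s t" "1 \<le> i" "i < n"
    "Inv s = Inv t - {(y, x)}" "res lam s i = cr y" "res lam t i = cr x"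
proof -
  have bt: "bij_betw t (diagram lam) {1..n}" using std by (simp add: std_tableau_def)
  have injt: "inj_on t (diagram lam)" using bt by (simp add: bij_betw_def)
  have yD: "y \<in> diagram lam" and xD: "x \<in> diagram lam" and rl: "t_row lam y < t_row lam x" and tl: "t x < t y"
    using yx by (auto simp: Inv_def)
  have ty: "t y \<in> {1..n}" and tx: "t x \<in> {1..n}" using bt yD xD by (auto simp: bij_betw_def)
  show i1: "1 \<le> i" using tx i_def by simp
  show iN: "i < n" using ty adj i_def by simp
  have sdef: "\<And>z. s z = Transposition.transpose i (Suc i) (t z)" by (simp add: s_def act_swap_def)
  have sx: "s x = Suc i" and sy: "s y = i" using sdef adj i_def by simp_all
  have s_other: "\<And>z. z \<in> diagram lam \<Longrightarrow> z \<noteq> x \<Longrightarrow> z \<noteq> y \<Longrightarrow> s z = t z"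
  proof -
    fix z assume z: "z \<in> diagram lam" "z \<noteq> x" "z \<noteq> y"
    then have "t z \<noteq> t x" "t z \<noteq> t y" using injt xD yD by (meson inj_on_contraD)+
    then show "s z = t z" using sdef adj i_def by (simp add: transpose_def)
  qed
  have bs: "bij_betw s (diagram lam) {1..n}"
  proof -
    have "bij_betw (Transposition.transpose i (Suc i)) {1..n} {1..n}"
      using i1 iN by (intro bij_betw_transpose_iff) auto
    then have "bij_betw (Transposition.transpose i (Suc i) \<circ> t) (diagram lam) {1..n}"
      using bt by (rule bij_betw_trans[rotated])
    then show ?thesis by (simp add: s_def act_swap_def comp_def)
  qed
  have rowneq: "\<And>u u'. u \<in> diagram lam \<Longrightarrow> u' \<in> diagram lam \<Longrightarrow> t_row lam u < t_row lam u' \<Longrightarrow> t u < t u' \<Longrightarrow> s u < s u'"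
  proof -
    fix u u' assume h: "u \<in> diagram lam" "u' \<in> diagram lam" "t_row lam u < t_row lam u'" "t u < t u'"
    have "\<not> (t u = i \<and> t u' = Suc i)"
    proof
      assume "t u = i \<and> t u' = Suc i"
      then have "t u = t x" "t u' = t y" using adj i_def by simp_all
      then have "u = x" "u' = y" using inj_onD[OF injt] h(1,2) xD yD by blast+
      then show False using h rl by simp
    qed
    then show "s u < s u'" using transpose_mono[OF h(4)] sdef by simp
  qed
  show "std_tableau lam n s"
    unfolding std_tableau_def
  proof (intro conjI allI impI)
    show "bij_betw s (diagram lam) {1..n}" by (rule bs)
  next
    fix z assume "z \<notin> diagram lam"
    then have "t z = 0" using std unfolding std_tableau_def by blast
    then show "s z = 0" using sdef i1 by (simp add: transpose_def)
  next
    fix a b c assume h: "(a, b, c) \<in> diagram lam \<and> (a, Suc b, c) \<in> diagram lam"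
    then have "t (a, b, c) < t (a, Suc b, c)" using std by (simp add: std_tableau_def)
    moreover have "t_row lam (a, b, c) < t_row lam (a, Suc b, c)" using h t_row_mono by simp
    ultimately show "s (a, b, c) < s (a, Suc b, c)" using rowneq h by blast
  next
    fix a b c assume h: "(a, b, c) \<in> diagram lam \<and> (Suc a, b, c) \<in> diagram lam"
    then have "t (a, b, c) < t (Suc a, b, c)" using std by (simp add: std_tableau_def)
    moreover have "t_row lam (a, b, c) < t_row lam (Suc a, b, c)" using h t_row_mono by simp
    ultimately show "s (a, b, c) < s (Suc a, b, c)" using rowneq h by blast
  qed
  show "tab_strictly_dominates lam n s t"
    unfolding tab_strictly_dominates_def tab_dominates_def
  proof (intro conjI ballI)
    show "s \<noteq> t"
    proof
      assume "s = t"
      then have "s x = t x" by simp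
      with sx show False using i_def by simp
    qed
  next
    fix k assume k: "k \<in> {1..n}"
    show "dominates (length lam) (shape_down lam s k) (shape_down lam t k)"
    proof (cases "k = i")
      case False
      then have "shape_down lam s k = shape_down lam t k"
        by (simp add: shape_down_def sdef transpose_le_iff)
      then show ?thesis by (simp add: dominates_def)
    next
      case True
      show ?thesis unfolding dominates_def partial_count_def
      proof (intro allI impI)
        fix c a :: nat
        let ?P = "\<lambda>z. case z of (a', b', c') \<Rightarrow> c' < c \<or> (c' = c \<and> a' \<le> a)"
        define h where "h z = (if z = x then y else z)" for z
        have "card {z \<in> shape_down lam t k. ?P z} \<le> card {z \<in> shape_down lam s k. ?P z}"
        proof (rule card_inj_on_le)
          show "inj_on h {z \<in> shape_down lam t k. ?P z}"
          proof (rule inj_onI)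
            fix z z' assume "z \<in> {z \<in> shape_down lam t k. ?P z}" "z' \<in> {z \<in> shape_down lam t k. ?P z}" "h z = h z'"
            moreover have "y \<notin> shape_down lam t k" using adj True i_def by (simp add: shape_down_def)
            ultimately show "z = z'" by (auto simp: h_def split: if_splits)
          qed
          show "h ` {z \<in> shape_down lam t k. ?P z} \<subseteq> {z \<in> shape_down lam s k. ?P z}"
          proof
            fix w assume "w \<in> h ` {z \<in> shape_down lam t k. ?P z}"
            then obtain z where z: "z \<in> shape_down lam t k" "?P z" "w = h z" by auto
            show "w \<in> {z \<in> shape_down lam s k. ?P z}"
            proof (cases "z = x")
              case True
              have "rowlex y x" using rl t_row_lt_iff yD xD by blast
              then have "?P y" using z True by (cases y; cases x) auto
              moreover have "y \<in> shape_down lam s k" using sy yD \<open>k = i\<close> by (simp add: shape_down_def)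
              ultimately show ?thesis using z True h_def by simp
            next
              case False
              have zD: "z \<in> diagram lam" using z by (simp add: shape_down_def)
              have "z \<noteq> y" using z adj \<open>k = i\<close> i_def by (auto simp: shape_down_def)
              then have "s z = t z" using s_other zD False by simp
              then show ?thesis using z False h_def by (simp add: shape_down_def)
            qed
          qed
          show "finite {z \<in> shape_down lam s k. ?P z}"
            by (rule finite_subset[OF _ D_finite]) (auto simp: shape_down_def)
        qed
        then show "card {(a', b', c') \<in> shape_down lam t k. c' < c \<or> (c' = c \<and> a' \<le> a)}
            \<le> card {(a', b', c') \<in> shape_down lam s k. c' < c \<or> (c' = c \<and> a' \<le> a)}"
        proof -
          have eq: "\<And>E. {(a', b', c') \<in> E. c' < c \<or> (c' = c \<and> a' \<le> a)} = {z \<in> E. ?P z}" by auto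
          show ?thesis unfolding eq by fact
        qed
      qed
    qed
  qed
  show "Inv s = Inv t - {(y, x)}"
  proof (rule set_eqI)
    fix p :: "(nat \<times> nat \<times> nat) \<times> (nat \<times> nat \<times> nat)"
    obtain u v where p: "p = (u, v)" by (cases p) auto
    show "p \<in> Inv s \<longleftrightarrow> p \<in> Inv t - {(y, x)}"
    proof (cases "u \<in> diagram lam \<and> v \<in> diagram lam \<and> t_row lam u < t_row lam v")
      case False
      then show ?thesis using p by (auto simp: Inv_def)
    next
      case True
      then have uv: "u \<in> diagram lam" "v \<in> diagram lam" "t_row lam u < t_row lam v" by auto
      have "(u, v) \<noteq> (x, y)" using uv rl by auto
      show ?thesis
      proof (cases "(u, v) = (y, x)")
        case True
        then show ?thesis using p sx sy by (simp add: Inv_def)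
      next
        case False
        have "s v < s u \<longleftrightarrow> t v < t u"
        proof -
          have "\<not> (t v = i \<and> t u = Suc i)"
          proof
            assume "t v = i \<and> t u = Suc i"
            then have "t v = t x" "t u = t y" using adj i_def by simp_all
            then have "v = x" "u = y" using inj_onD[OF injt] uv(1,2) xD yD by blast+
            then show False using False by simp
          qed
          moreover have "\<not> (t u = i \<and> t v = Suc i)"
          proof
            assume "t u = i \<and> t v = Suc i"
            then have "t u = t x" "t v = t y" using adj i_def by simp_all
            then have "u = x" "v = y" using inj_onD[OF injt] uv(1,2) xD yD by blast+
            then show False using uv rl by simp
          qed
          moreover have "t u \<noteq> t v"
          proof
            assume "t u = t v"
            then have "u = v" using inj_onD[OF injt] uv(1,2) by blast
            then show False using uv(3) by simp
          qed
          note c = calculation this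
          show ?thesis
          proof (cases "t v < t u")
            case True
            then show ?thesis using transpose_mono[of "t v" "t u" i] c sdef by simp
          next
            case False
            then have "t u < t v" using c by simp
            then have "s u < s v" using transpose_mono[of "t u" "t v" i] c sdef by simp
            then show ?thesis using False by simp
          qed
        qed
        then show ?thesis using p uv False by (simp add: Inv_def)
      qed
    qed
  qed
  show "res lam s i = cr y" by (rule res_cr[OF bs yD sy])
  show "res lam t i = cr x" by (rule res_cr[OF bt xD]) (simp add: i_def)
qed

end

locale MPG = MP +
  fixes g :: "tableau \<Rightarrow> ratfun"
  assumes gam: "is_gamma lam n g"
begin

lemma g_formula:
  "std_tableau lam n t \<Longrightarrow> g t = gamma_init lam * (\<Prod>p\<in>Inv t. Fg (fst p) (snd p))"
proof (induction "card (Inv t)" arbitrary: t rule: less_induct)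
  case less
  show ?case
  proof (cases "Inv t = {}")
    case True
    then have "t = t_row lam" using no_inv_eq less.prems by blast
    then show ?thesis using gam True by (simp add: is_gamma_def)
  next
    case False
    then obtain y x where yx: "(y, x) \<in> Inv t" and adj: "t y = Suc (t x)"
      using adjacent_inv less.prems by blast
    define i where "i = t x"
    define s where "s = act_swap t i"
    note st = step[OF less.prems yx adj, folded i_def, folded s_def]
    have "card (Inv s) < card (Inv t)"
      unfolding st(5) by (rule card_Diff1_less[OF Inv_finite yx])
    then have IH: "g s = gamma_init lam * (\<Prod>p\<in>Inv s. Fg (fst p) (snd p))"
      using less.hyps st(1) by blast
    have "g t = (qv * res lam s i - res lam t i) * (res lam s i - qv * res lam t i)
               / (res lam s i - res lam t i)\<^sup>2 * g s"
      using gam less.prems st unfolding is_gamma_def s_def by blast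
    also have "\<dots> = Fg y x * g s" using st(6,7) by (simp add: Fg_def)
    also have "\<dots> = gamma_init lam * (Fg y x * (\<Prod>p\<in>Inv t - {(y, x)}. Fg (fst p) (snd p)))"
      using IH st(5) by (simp add: ac_simps)
    also have "\<dots> = gamma_init lam * (\<Prod>p\<in>Inv t. Fg (fst p) (snd p))"
      using prod.remove[OF Inv_finite yx, of "\<lambda>p. Fg (fst p) (snd p)"] by simp
    finally show ?thesis .
  qed
qed

end


definition Fq :: "nat \<times> nat \<times> nat \<Rightarrow> nat \<times> nat \<times> nat \<Rightarrow> ratfun" where
  "Fq y x = (qv * cr y - cr x) * (cr y - qv * cr x) / (qv * (cr y - cr x)\<^sup>2)"

lemma Fg_Fq: "Fg y x = qv * Fq y x"
proof -
  have "Fq y x = Fg y x / qv" unfolding Fq_def Fg_def by (simp add: divide_divide_eq_left mult.commute)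
  then show ?thesis using qv_nz by simp
qed

lemma Fq_intra:
  assumes "e \<ge> 1" "cr y = qv ^ e * cr x" "cr x \<noteq> 0"
  shows "Fq y x = PP (e+1) * PP (e-1) / PP e ^ 2"
proof -
  obtain f where f: "e = Suc f" using assms(1) by (cases e) auto
  have q: "qv \<noteq> 0" by (rule qv_nz)
  define W where "W = qv * qv ^ f"
  define c where "c = cr x"
  have c: "c * c \<noteq> 0" using assms(3) c_def by simp
  have N: "(qv * cr y - cr x) * (cr y - qv * cr x) = (c * c) * ((qv * W - 1) * qv * (qv ^ f - 1))"
    unfolding assms(2) f W_def c_def by (simp add: algebra_simps)
  have Dn: "qv * (cr y - cr x)\<^sup>2 = (c * c) * (qv * (W - 1)\<^sup>2)"
    unfolding assms(2) f W_def c_def by (simp add: algebra_simps power2_eq_square)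
  have "Fq y x = ((c * c) * ((qv * W - 1) * qv * (qv ^ f - 1))) / ((c * c) * (qv * (W - 1)\<^sup>2))"
    unfolding Fq_def N Dn ..
  also have "\<dots> = ((qv * W - 1) * qv * (qv ^ f - 1)) / (qv * (W - 1)\<^sup>2)"
    using c by (rule mult_divide_mult_cancel_left)
  also have "\<dots> = (qv * ((qv * W - 1) * (qv ^ f - 1))) / (qv * (W - 1)\<^sup>2)"
    by (simp add: ac_simps)
  also have "\<dots> = ((qv * W - 1) * (qv ^ f - 1)) / (W - 1)\<^sup>2"
    using q by (rule mult_divide_mult_cancel_left)
  also have "\<dots> = PP (e+1) * PP (e-1) / PP e ^ 2"
    unfolding PP_def f W_def by simp
  finally show ?thesis .
qed

lemma cr_nz: "cr x \<noteq> 0"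
  using qv_nz Qv_nz by (cases x) (simp add: cr_def)

context MP begin

definition CrossS where
  "CrossS = {(y, x). y \<in> diagram lam \<and> x \<in> diagram lam \<and> snd (snd y) < snd (snd x)}"

definition IntraS where
  "IntraS = {(y, x). y \<in> diagram lam \<and> x \<in> diagram lam \<and> snd (snd y) = snd (snd x)
      \<and> fst y < fst x \<and> fst (snd x) < fst (snd y)}"

lemma Inv_col: "Inv (t_col lam) = CrossS \<union> IntraS"
proof (rule set_eqI)
  fix p :: "(nat \<times> nat \<times> nat) \<times> (nat \<times> nat \<times> nat)"
  obtain a b s c d t where p: "p = ((a, b, s), (c, d, t))" by (cases p) auto
  show "p \<in> Inv (t_col lam) \<longleftrightarrow> p \<in> CrossS \<union> IntraS"
  proof (cases "(a, b, s) \<in> diagram lam \<and> (c, d, t) \<in> diagram lam")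
    case True
    then have "t_row lam (a, b, s) < t_row lam (c, d, t) \<longleftrightarrow> rowlex (a, b, s) (c, d, t)"
      "t_col lam (c, d, t) < t_col lam (a, b, s) \<longleftrightarrow> collex (c, d, t) (a, b, s)"
      using t_row_lt_iff t_col_lt_iff by blast+
    then show ?thesis using True p by (auto simp: Inv_def CrossS_def IntraS_def)
  next
    case False
    then show ?thesis using p by (auto simp: Inv_def CrossS_def IntraS_def)
  qed
qed

lemma CrossS_IntraS_disj: "CrossS \<inter> IntraS = {}"
  by (auto simp: CrossS_def IntraS_def)

lemma coxeter_card: "coxeter_length n (w_lam lam) = card (Inv (t_col lam))"
proof -
  let ?C = "{(a, b). 1 \<le> a \<and> a < b \<and> b \<le> n \<and> w_lam lam b < w_lam lam a}"
  let ?f = "\<lambda>(y, x). (t_row lam y, t_row lam x)"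
  have inv_tr: "\<And>y. y \<in> diagram lam \<Longrightarrow> inv_into (diagram lam) (t_row lam) (t_row lam y) = y"
    using t_row_inj by (simp add: inv_into_f_f)
  have w: "\<And>y. y \<in> diagram lam \<Longrightarrow> w_lam lam (t_row lam y) = t_col lam y"
    using inv_tr by (simp add: w_lam_def)
  have inj: "inj_on ?f (Inv (t_col lam))"
  proof (rule inj_onI)
    fix p p' assume h: "p \<in> Inv (t_col lam)" "p' \<in> Inv (t_col lam)" "?f p = ?f p'"
    obtain y x where p: "p = (y, x)" by (cases p) auto
    obtain y' x' where p': "p' = (y', x')" by (cases p') auto
    have D: "y \<in> diagram lam" "x \<in> diagram lam" "y' \<in> diagram lam" "x' \<in> diagram lam"
      using h p p' by (auto simp: Inv_def)
    have "t_row lam y = t_row lam y'" "t_row lam x = t_row lam x'" using h(3) p p' by auto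
    then have "y = y'" "x = x'" using inj_onD[OF t_row_inj] D by blast+
    then show "p = p'" using p p' by simp
  qed
  have img: "?f ` Inv (t_col lam) = ?C"
  proof
    show "?f ` Inv (t_col lam) \<subseteq> ?C"
    proof
      fix q assume "q \<in> ?f ` Inv (t_col lam)"
      then obtain y x where yx: "(y, x) \<in> Inv (t_col lam)" "q = (t_row lam y, t_row lam x)" by auto
      have D: "y \<in> diagram lam" "x \<in> diagram lam" using yx by (auto simp: Inv_def)
      show "q \<in> ?C" using yx t_row_range[OF D(1)] t_row_range[OF D(2)] w[OF D(1)] w[OF D(2)]
        by (auto simp: Inv_def)
    qed
    show "?C \<subseteq> ?f ` Inv (t_col lam)"
    proof
      fix q assume q: "q \<in> ?C"
      obtain a b where ab: "q = (a, b)" by (cases q) auto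
      have "a \<in> {1..n}" "b \<in> {1..n}" using q ab by auto
      then have "a \<in> t_row lam ` diagram lam" "b \<in> t_row lam ` diagram lam"
        using t_row_bij by (auto simp: bij_betw_def)
      then obtain y x where y: "y \<in> diagram lam" "t_row lam y = a" and x: "x \<in> diagram lam" "t_row lam x = b"
        by blast
      have "(y, x) \<in> Inv (t_col lam)" using q ab x y w[OF x(1)] w[OF y(1)] by (auto simp: Inv_def)
      then show "q \<in> ?f ` Inv (t_col lam)" using ab x y by force
    qed
  qed
  have "card ?C = card (Inv (t_col lam))" using card_image[OF inj] img by simp
  then show ?thesis by (simp add: coxeter_length_def)
qed

end


lemma qfact_rev: "qfact m = (\<Prod>j\<in>{1..m}. qint (m - j + 1))"
  unfolding qfact_def
  by (rule prod.reindex_bij_witness[of _ "\<lambda>j. m - j + 1" "\<lambda>j. m - j + 1"]) auto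

context MP begin

lemma Ds_finite': "finite {x \<in> diagram lam. snd (snd x) = i}"
  by (rule finite_subset[OF _ D_finite]) auto

lemma D_prod_Ds: "(\<Prod>z\<in>diagram lam. f z) = (\<Prod>s\<in>{1..r}. \<Prod>z\<in>Ds s. f z)"
  unfolding D_union
  by (rule prod.UNION_disjoint) (use Ds_finite in \<open>auto simp: Ds_def\<close>)

lemma Ds_prod_rows:
  assumes "1 \<le> s" "s \<le> r"
  shows "(\<Prod>z\<in>Ds s. f z) = (\<Prod>i\<in>{1..length (lam ! (s-1))}. \<Prod>j\<in>{1..rowlen lam s i}. f (i, j, s))"
proof -
  have inj: "inj_on (\<lambda>(i, j). (i, j, s)) (SIGMA i:{1..length (lam ! (s-1))}. {1..rowlen lam s i})"
    by (auto simp: inj_on_def)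
  show ?thesis
    unfolding Ds_rows[OF assms] prod.reindex[OF inj]
    by (subst prod.Sigma) (simp_all add: split_def)
qed

lemma Ds_prod_cols:
  assumes "1 \<le> s" "s \<le> r"
  shows "(\<Prod>z\<in>Ds s. f z) = (\<Prod>j\<in>{1..rowlen lam s 1}. \<Prod>i\<in>{1..collen lam s j}. f (i, j, s))"
proof -
  have inj: "inj_on (\<lambda>(j, i). (i, j, s)) (SIGMA j:{1..rowlen lam s 1}. {1..collen lam s j})"
    by (auto simp: inj_on_def)
  show ?thesis
    unfolding Ds_cols[OF assms] prod.reindex[OF inj]
    by (subst prod.Sigma) (simp_all add: split_def)
qed

lemma qfact_mp_eq:
  "qfact_mp lam = (\<Prod>z\<in>diagram lam. case z of (i, j, s) \<Rightarrow> qint (rowlen lam s i - j + 1))"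
proof -
  have "qfact_mp lam = (\<Prod>s\<in>{1..r}. \<Prod>i\<in>{1..length (lam ! (s-1))}. \<Prod>j\<in>{1..rowlen lam s i}. qint (rowlen lam s i - j + 1))"
    unfolding qfact_mp_def len_lam qfact_rev ..
  also have "\<dots> = (\<Prod>s\<in>{1..r}. \<Prod>z\<in>Ds s. case z of (i, j, s) \<Rightarrow> qint (rowlen lam s i - j + 1))"
    by (rule prod.cong[OF refl]) (simp add: Ds_prod_rows)
  also have "\<dots> = (\<Prod>z\<in>diagram lam. case z of (i, j, s) \<Rightarrow> qint (rowlen lam s i - j + 1))"
    by (rule D_prod_Ds[symmetric])
  finally show ?thesis .
qed

lemma gamma_init_eq:
  "gamma_init lam = (\<Prod>z\<in>diagram lam. case z of (i, j, s) \<Rightarrow> qint (rowlen lam s i - j + 1))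
     * (\<Prod>y\<in>diagram lam. \<Prod>t\<in>{snd (snd y)<..r}. (cr y - Qv t))"
proof -
  have "(\<Prod>s\<in>{1..length lam}. \<Prod>t\<in>{s<..length lam}.
        \<Prod>(i, j, c)\<in>{x \<in> diagram lam. snd (snd x) = s}. qv powi (int j - int i) * Qv s - Qv t)
      = (\<Prod>s\<in>{1..r}. \<Prod>t\<in>{s<..r}. \<Prod>y\<in>Ds s. (cr y - Qv t))"
    unfolding len_lam
  proof (rule prod.cong[OF refl], rule prod.cong[OF refl])
    fix s t
    show "(\<Prod>(i, j, c)\<in>{x \<in> diagram lam. snd (snd x) = s}. qv powi (int j - int i) * Qv s - Qv t)
        = (\<Prod>y\<in>Ds s. (cr y - Qv t))"
      unfolding Ds_def by (rule prod.cong[OF refl]) (auto simp: cr_def)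
  qed
  also have "\<dots> = (\<Prod>s\<in>{1..r}. \<Prod>y\<in>Ds s. \<Prod>t\<in>{s<..r}. (cr y - Qv t))"
    by (rule prod.cong[OF refl], rule prod.swap)
  also have "\<dots> = (\<Prod>s\<in>{1..r}. \<Prod>y\<in>Ds s. \<Prod>t\<in>{snd (snd y)<..r}. (cr y - Qv t))"
    by (rule prod.cong[OF refl], rule prod.cong[OF refl]) (simp add: Ds_def)
  also have "\<dots> = (\<Prod>y\<in>diagram lam. \<Prod>t\<in>{snd (snd y)<..r}. (cr y - Qv t))"
    by (rule D_prod_Ds[symmetric])
  finally show ?thesis unfolding gamma_init_def qfact_mp_eq by simp
qed

lemma prod_Cross:
  "(\<Prod>p\<in>CrossS. Fq (fst p) (snd p)) = (\<Prod>y\<in>diagram lam. \<Prod>t\<in>{snd (snd y)<..r}. \<Prod>x\<in>Ds t. Fq y x)"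
proof -
  have C: "CrossS = Sigma (diagram lam) (\<lambda>y. \<Union>t\<in>{snd (snd y)<..r}. Ds t)"
    by (auto simp: CrossS_def Ds_def inD)
  have "(\<Prod>p\<in>CrossS. Fq (fst p) (snd p)) = (\<Prod>y\<in>diagram lam. \<Prod>x\<in>(\<Union>t\<in>{snd (snd y)<..r}. Ds t). Fq y x)"
    unfolding C by (subst prod.Sigma) (auto simp: D_finite Ds_finite Ds_finite' split_def)
  also have "\<dots> = (\<Prod>y\<in>diagram lam. \<Prod>t\<in>{snd (snd y)<..r}. \<Prod>x\<in>Ds t. Fq y x)"
    by (rule prod.cong[OF refl], rule prod.UNION_disjoint) (auto simp: Ds_finite' Ds_def)
  finally show ?thesis .
qed

end


definition phi :: "(nat \<times> nat \<times> nat) \<times> nat \<times> nat \<Rightarrow> (nat \<times> nat \<times> nat) \<times> (nat \<times> nat \<times> nat)" where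
  "phi = (\<lambda>((a, d, s), (u, v)). ((a, d + u, s), (a + v, d, s)))"

definition Gq :: "nat \<Rightarrow> ratfun" where "Gq e = PP (e+1) * PP (e-1) / PP e ^ 2"

lemma Fq_phi:
  assumes "u \<ge> 1"
  shows "Fq (a, d + u, s) (a + v, d, s) = Gq (u + v)"
proof -
  have "cr (a, d + u, s) = qv ^ (u + v) * cr (a + v, d, s)"
  proof -
    have "qv powi (int (d + u) - int a) = qv powi (int (u + v) + (int d - int (a + v)))"
      by (rule arg_cong[where f="\<lambda>e. qv powi e"]) simp
    also have "\<dots> = qv powi int (u + v) * qv powi (int d - int (a + v))"
      using qv_nz by (intro power_int_add) simp
    also have "\<dots> = qv ^ (u + v) * qv powi (int d - int (a + v))"
      by (simp only: power_int_of_nat)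
    finally have e: "qv powi (int (d + u) - int a) = qv ^ (u + v) * qv powi (int d - int (a + v))" .
    show ?thesis unfolding cr_def prod.case e by (simp only: mult.assoc)
  qed
  then show ?thesis unfolding Gq_def using Fq_intra[of "u+v"] cr_nz assms by simp
qed

context MP begin

definition Aof :: "nat \<times> nat \<times> nat \<Rightarrow> nat" where "Aof = (\<lambda>(a, d, s). rowlen lam s a - d)"
definition Lof :: "nat \<times> nat \<times> nat \<Rightarrow> nat" where "Lof = (\<lambda>(a, d, s). collen lam s d - a)"

lemma IntraS_img: "IntraS = phi ` (SIGMA z:diagram lam. {1..Aof z} \<times> {1..Lof z})"
proof
  show "IntraS \<subseteq> phi ` (SIGMA z:diagram lam. {1..Aof z} \<times> {1..Lof z})"
  proof
    fix p assume p: "p \<in> IntraS"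
    obtain a b s c d t where pe: "p = ((a, b, s), (c, d, t))" by (cases p) auto
    have h: "(a, b, s) \<in> diagram lam" "(c, d, t) \<in> diagram lam" "s = t" "a < c" "d < b"
      using p pe by (auto simp: IntraS_def)
    have hd: "1 \<le> s" "s \<le> r" "1 \<le> a" "1 \<le> b" "b \<le> rowlen lam s a" "1 \<le> c" "1 \<le> d" "d \<le> rowlen lam s c"
      using h by (auto simp: inD)
    have "c \<le> collen lam s d" using collen_iff[of d c s] hd by simp
    then have mem: "((a, d, s), (b - d, c - a)) \<in> (SIGMA z:diagram lam. {1..Aof z} \<times> {1..Lof z})"
      using hd h by (auto simp: inD Aof_def Lof_def)
    have "phi ((a, d, s), (b - d, c - a)) = p" using pe h by (simp add: phi_def)
    then show "p \<in> phi ` (SIGMA z:diagram lam. {1..Aof z} \<times> {1..Lof z})" using mem by force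
  qed
  show "phi ` (SIGMA z:diagram lam. {1..Aof z} \<times> {1..Lof z}) \<subseteq> IntraS"
  proof
    fix p assume "p \<in> phi ` (SIGMA z:diagram lam. {1..Aof z} \<times> {1..Lof z})"
    then obtain a d s u v where m: "(a, d, s) \<in> diagram lam" "u \<in> {1..Aof (a, d, s)}" "v \<in> {1..Lof (a, d, s)}"
      and pe: "p = phi ((a, d, s), (u, v))" by force
    have hd: "1 \<le> s" "s \<le> r" "1 \<le> a" "1 \<le> d" "d + u \<le> rowlen lam s a" "a + v \<le> collen lam s d" "1 \<le> u" "1 \<le> v"
      using m by (auto simp: inD Aof_def Lof_def)
    have "d \<le> rowlen lam s (a + v)" using collen_iff[of d "a+v" s] hd by simp
    then show "p \<in> IntraS" using pe hd by (auto simp: phi_def IntraS_def inD)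
  qed
qed

lemma phi_inj: "inj_on phi X"
  by (rule inj_onI) (auto simp: phi_def split: prod.splits)

lemma prod_Intra:
  "(\<Prod>p\<in>IntraS. Fq (fst p) (snd p))
    = (\<Prod>z\<in>diagram lam. \<Prod>u\<in>{1..Aof z}. \<Prod>v\<in>{1..Lof z}. Gq (u + v))"
proof -
  let ?T = "SIGMA z:diagram lam. {1..Aof z} \<times> {1..Lof z}"
  have "(\<Prod>p\<in>IntraS. Fq (fst p) (snd p)) = (\<Prod>q\<in>?T. Fq (fst (phi q)) (snd (phi q)))"
    unfolding IntraS_img by (subst prod.reindex[OF phi_inj]) (simp add: comp_def)
  also have "\<dots> = (\<Prod>q\<in>?T. Gq (fst (snd q) + snd (snd q)))"
  proof (rule prod.cong[OF refl])
    fix q assume "q \<in> ?T"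
    then obtain a d s u v where q: "q = ((a, d, s), (u, v))" and u: "u \<ge> 1" by force
    show "Fq (fst (phi q)) (snd (phi q)) = Gq (fst (snd q) + snd (snd q))"
      using Fq_phi[OF u] q by (simp add: phi_def)
  qed
  also have "\<dots> = (\<Prod>z\<in>diagram lam. \<Prod>uv\<in>{1..Aof z} \<times> {1..Lof z}. Gq (fst uv + snd uv))"
    by (subst prod.Sigma) (auto simp: D_finite split_def)
  also have "\<dots> = (\<Prod>z\<in>diagram lam. \<Prod>u\<in>{1..Aof z}. \<Prod>v\<in>{1..Lof z}. Gq (u + v))"
    by (rule prod.cong[OF refl]) (simp add: prod.cartesian_product split_def)
  finally show ?thesis .
qed

end


lemma Fq_cross:
  assumes "cr x = qv powi m * Q"
  shows "Fq y x = (cr y - qv powi (m - 1) * Q) * (cr y - qv powi (m + 1) * Q) / (cr y - qv powi m * Q)\<^sup>2"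
proof -
  define A where "A = qv powi (m - 1)"
  have q: "qv \<noteq> 0" by (rule qv_nz)
  have m: "qv powi m = A * qv"
  proof -
    have "qv powi ((m - 1) + 1) = qv powi (m - 1) * qv powi 1" using q by (intro power_int_add) simp
    then show ?thesis unfolding A_def by simp
  qed
  have m1: "qv powi (m + 1) = A * qv * qv"
  proof -
    have "qv powi (m + 1) = qv powi m * qv powi 1" using q by (intro power_int_add) simp
    then show ?thesis using m by simp
  qed
  have "Fq y x = (qv * ((cr y - A * Q) * (cr y - A * qv * qv * Q))) / (qv * (cr y - A * qv * Q)\<^sup>2)"
    unfolding Fq_def assms m by (simp add: algebra_simps)
  also have "\<dots> = ((cr y - A * Q) * (cr y - A * qv * qv * Q)) / (cr y - A * qv * Q)\<^sup>2"
    using q by (rule mult_divide_mult_cancel_left)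
  finally show ?thesis unfolding A_def[symmetric] m m1 by simp
qed

context MP begin

lemma cross_identity:
  assumes y: "y \<in> diagram lam" and st: "snd (snd y) < t" "t \<le> r"
  shows "(cr y - Qv t) * (\<Prod>x\<in>Ds t. Fq y x)
    = (cr y - qv ^ rowlen lam t 1 * Qv t) *
      (\<Prod>k\<in>{1..rowlen lam t 1}.
         (cr y - qv powi (int k - 1 - int (collen lam t k)) * Qv t) /
         (cr y - qv powi (int k - int (collen lam t k)) * Qv t))"
proof -
  obtain a b s where ye: "y = (a, b, s)" by (cases y) auto
  have s1: "1 \<le> s" "s \<noteq> t" "1 \<le> t" using y ye st by (auto simp: inD)
  define K where "K m = cr y - qv powi m * Qv t" for m
  have Knz: "K m \<noteq> 0" for m
  proof
    assume "K m = 0"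
    then have "qv powi (int b - int a) * Qv s = qv powi m * Qv t" by (simp add: K_def ye cr_def)
    then show False using QQ_ne[OF s1(2) s1(1)] by blast
  qed
  define M where "M = rowlen lam t 1"
  define L where "L k = collen lam t k" for k
  have "(\<Prod>x\<in>Ds t. Fq y x) = (\<Prod>d\<in>{1..M}. \<Prod>c\<in>{1..L d}. Fq y (c, d, t))"
    unfolding M_def L_def by (rule Ds_prod_cols) (use s1 st in auto)
  also have "\<dots> = (\<Prod>d\<in>{1..M}. \<Prod>c\<in>{1..L d}. K (int d - int c - 1) * K (int d - int c + 1) / K (int d - int c) ^ 2)"
  proof (rule prod.cong[OF refl], rule prod.cong[OF refl])
    fix d c
    have "cr (c, d, t) = qv powi (int d - int c) * Qv t" by (simp add: cr_def)
    then show "Fq y (c, d, t) = K (int d - int c - 1) * K (int d - int c + 1) / K (int d - int c) ^ 2"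
      unfolding K_def by (rule Fq_cross)
  qed
  also have "\<dots> = (\<Prod>d\<in>{1..M}. K (int d - int (L d) - 1) * K (int d) / (K (int d - int (L d)) * K (int d - 1)))"
    by (rule prod.cong[OF refl], rule col_tel[OF Knz])
  also have "\<dots> = (\<Prod>d\<in>{1..M}. (K (int d - int (L d) - 1) / K (int d - int (L d))) * (K (int d) / K (int d - 1)))"
    by (simp add: times_divide_times_eq)
  also have "\<dots> = (\<Prod>d\<in>{1..M}. K (int d - int (L d) - 1) / K (int d - int (L d))) * (K (int M) / K 0)"
    by (rule row_tel[OF Knz])
  finally have e: "(\<Prod>x\<in>Ds t. Fq y x) = (\<Prod>d\<in>{1..M}. K (int d - int (L d) - 1) / K (int d - int (L d))) * (K (int M) / K 0)" .
  have K0: "cr y - Qv t = K 0" by (simp add: K_def)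
  have KM: "cr y - qv ^ M * Qv t = K (int M)" by (simp add: K_def power_int_of_nat)
  have F: "(\<Prod>k\<in>{1..M}. (cr y - qv powi (int k - 1 - int (L k)) * Qv t) / (cr y - qv powi (int k - int (L k)) * Qv t))
      = (\<Prod>d\<in>{1..M}. K (int d - int (L d) - 1) / K (int d - int (L d)))"
    by (rule prod.cong[OF refl]) (simp add: K_def algebra_simps)
  show ?thesis
    unfolding M_def[symmetric] L_def[symmetric] e K0 KM F using Knz[of 0] by simp
qed

lemma node_id:
  assumes z: "z \<in> diagram lam"
  shows "(case z of (i, j, s) \<Rightarrow> qint (rowlen lam s i - j + 1)) * (\<Prod>u\<in>{1..Aof z}. \<Prod>v\<in>{1..Lof z}. Gq (u + v))
    = (case z of (i, j, s) \<Rightarrow> qint (hook lam s i j) / qint (leg lam s i j))"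
proof -
  obtain i j s where ze: "z = (i, j, s)" by (cases z) auto
  have h: "1 \<le> i" "1 \<le> j" "j \<le> rowlen lam s i" using z ze by (auto simp: inD)
  then have c: "i \<le> collen lam s j" using collen_iff by simp
  have A: "Aof z = rowlen lam s i - j" and L: "Lof z = collen lam s j - i" by (simp_all add: ze Aof_def Lof_def)
  have hk: "hook lam s i j = (rowlen lam s i - j) + (collen lam s j - i) + 1"
    using h c by (simp add: hook_def)
  have lg: "leg lam s i j = (collen lam s j - i) + 1"
    using c by (simp add: leg_def)
  show ?thesis
    unfolding ze prod.case A[unfolded ze] L[unfolded ze] hk lg Gq_def
    using node_identity[of "rowlen lam s i - j" "collen lam s j - i"] h by simp
qed

end

context MPG begin

theorem main:
  "g (t_col lam) = gamma_formula lam n"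
proof -
  let ?Inv = "Inv (t_col lam)"
  have fin: "finite CrossS" "finite IntraS"
    using Inv_finite[of "t_col lam"] unfolding Inv_col by auto
  have "g (t_col lam) = gamma_init lam * (\<Prod>p\<in>?Inv. Fg (fst p) (snd p))"
    by (rule g_formula[OF std_t_col])
  also have "(\<Prod>p\<in>?Inv. Fg (fst p) (snd p)) = qv ^ card ?Inv * (\<Prod>p\<in>?Inv. Fq (fst p) (snd p))"
    by (simp add: Fg_Fq prod.distrib)
  also have "(\<Prod>p\<in>?Inv. Fq (fst p) (snd p))
      = (\<Prod>p\<in>CrossS. Fq (fst p) (snd p)) * (\<Prod>p\<in>IntraS. Fq (fst p) (snd p))"
    unfolding Inv_col by (rule prod.union_disjoint) (use fin CrossS_IntraS_disj in auto)
  also have "card ?Inv = coxeter_length n (w_lam lam)" by (simp add: coxeter_card)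
  finally have g1: "g (t_col lam) = qv ^ coxeter_length n (w_lam lam) *
      ((\<Prod>z\<in>diagram lam. case z of (i, j, s) \<Rightarrow> qint (rowlen lam s i - j + 1))
        * (\<Prod>z\<in>diagram lam. \<Prod>u\<in>{1..Aof z}. \<Prod>v\<in>{1..Lof z}. Gq (u + v)))
     * ((\<Prod>y\<in>diagram lam. \<Prod>t\<in>{snd (snd y)<..r}. (cr y - Qv t))
        * (\<Prod>y\<in>diagram lam. \<Prod>t\<in>{snd (snd y)<..r}. \<Prod>x\<in>Ds t. Fq y x))"
    unfolding gamma_init_eq prod_Cross prod_Intra by (simp add: ac_simps)
  have H: "(\<Prod>z\<in>diagram lam. case z of (i, j, s) \<Rightarrow> qint (rowlen lam s i - j + 1))
        * (\<Prod>z\<in>diagram lam. \<Prod>u\<in>{1..Aof z}. \<Prod>v\<in>{1..Lof z}. Gq (u + v))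
      = (\<Prod>z\<in>diagram lam. case z of (i, j, s) \<Rightarrow> qint (hook lam s i j) / qint (leg lam s i j))"
    unfolding prod.distrib[symmetric] by (rule prod.cong[OF refl], rule node_id)
  define CF where "CF y t = (case y of (i, j, s) \<Rightarrow>
          (qv powi (int j - int i) * Qv s - qv ^ rowlen lam t 1 * Qv t) *
          (\<Prod>k\<in>{1..rowlen lam t 1}.
             (qv powi (int j - int i) * Qv s - qv powi (int k - 1 - int (collen lam t k)) * Qv t) /
             (qv powi (int j - int i) * Qv s - qv powi (int k - int (collen lam t k)) * Qv t)))" for y t
  have C: "(\<Prod>y\<in>diagram lam. \<Prod>t\<in>{snd (snd y)<..r}. (cr y - Qv t))
        * (\<Prod>y\<in>diagram lam. \<Prod>t\<in>{snd (snd y)<..r}. \<Prod>x\<in>Ds t. Fq y x)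
      = (\<Prod>y\<in>diagram lam. \<Prod>t\<in>{snd (snd y)<..r}. CF y t)"
    unfolding prod.distrib[symmetric]
  proof (rule prod.cong[OF refl], rule prod.cong[OF refl])
    fix y t assume y: "y \<in> diagram lam" and t: "t \<in> {snd (snd y)<..r}"
    obtain i j s where ye: "y = (i, j, s)" by (cases y) auto
    show "(cr y - Qv t) * (\<Prod>x\<in>Ds t. Fq y x) = CF y t"
      using cross_identity[OF y, of t] t unfolding CF_def ye by (simp add: cr_def)
  qed
  have "gamma_formula lam n = qv ^ coxeter_length n (w_lam lam) *
      (\<Prod>y\<in>diagram lam. (case y of (i, j, s) \<Rightarrow> qint (hook lam s i j) / qint (leg lam s i j))
         * (\<Prod>t\<in>{snd (snd y)<..r}. CF y t))"
    unfolding gamma_formula_def CF_def len_lam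
    by (rule arg_cong[where f="\<lambda>X. qv ^ coxeter_length n (w_lam lam) * X"], rule prod.cong[OF refl]) auto
  also have "\<dots> = qv ^ coxeter_length n (w_lam lam) *
      ((\<Prod>y\<in>diagram lam. case y of (i, j, s) \<Rightarrow> qint (hook lam s i j) / qint (leg lam s i j))
         * (\<Prod>y\<in>diagram lam. \<Prod>t\<in>{snd (snd y)<..r}. CF y t))"
    by (simp add: prod.distrib)
  finally show ?thesis unfolding g1 H C by (simp add: ac_simps)
qed

end

theorem lemma5p15:
  fixes r n :: nat and lam :: "nat list list" and g :: "tableau \<Rightarrow> ratfun"
  assumes "1 \<le> n" and "1 \<le> r"
    and "is_multipartition r n lam"
    and "is_gamma lam n g"
  shows "g (t_col lam) = gamma_formula lam n"
proof -
  interpret MPG r n lam g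
    using assms(3,4) by (unfold_locales)
  show ?thesis by (rule main)
qed


end
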